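(* Let $\mathcal{G}_{\mathrm{bip}}$ be the class of all one-directional bipartite influence graphs $G=(L,R,E,p)$. Then, for the influence maximization problem in the independent cascade model with full-adoption feedback, $$\sup_{G\in\mathcal{G}_{\mathrm{bip}},\,k\ge 1}\frac{\mathrm{OPT}_A(G,k)}{\mathrm{OPT}_N(G,k)}=\frac{e}{e-1}.$$
   Context: A one-directional bipartite influence graph $G=(L,R,E,p)$ has node set $V=L\cup R$ ($L,R$ disjoint), edge set $E\subseteq L\times R$ (every edge points from a node of $L$ to a node of $R$), and a probability $p_{uv}\in[0,1]$ on each edge. Independent cascade (IC) model: a live-edge graph (realization) $\phi$ is a random subgraph in which each edge $(u,v)$ is present ("live") independently with probability $p_{uv}$; $\mathcal{P}$ denotes this distribution. For $S\subseteq V$, $\Gamma(S,\phi)$ is the set of nodes reachable from $S$ in $\phi$, and $\sigma(S)=\mathbb{E}_{\Phi\sim\mathcal{P}}[|\Gamma(S,\Phi)|]$. Full-adoption feedback: when a node $u$ is selected as a seed, one observes the live/blocked status of all out-going edges of every node reachable from $u$ in the realization. A partial realization records the seeds selected so far with their observed feedback. An adaptive policy $\pi$ maps partial realizations to the next node to select; $V(\pi,\phi)$ is the seed set it selects under realization $\phi$, and $\sigma(\pi)=\mathbb{E}_{\Phi\sim\mathcal{P}}[|\Gamma(V(\pi,\Phi),\Phi)|]$. $\Pi(k)$ is the set of policies with $|V(\pi,\phi)|\le k$ for every realization $\phi$. $\mathrm{OPT}_N(G,k)=\max_{S\subseteq V,|S|\le k}\sigma(S)$ and $\mathrm{OPT}_A(G,k)=\sup_{\pi\in\Pi(k)}\sigma(\pi)$.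 *)

theory Defs
  imports Complex_Main
begin

text \<open>Nodes are natural numbers (every finite graph is isomorphic to one on nat).
A one-directional bipartite influence graph is (L, R, E, p).\<close>

type_synonym node = nat
type_synonym edge = "node \<times> node"

definition bip_graph :: "node set \<Rightarrow> node set \<Rightarrow> edge set \<Rightarrow> (edge \<Rightarrow> real) \<Rightarrow> bool" where
  "bip_graph L R E p \<longleftrightarrow> finite L \<and> finite R \<and> L \<inter> R = {} \<and> E \<subseteq> L \<times> R
     \<and> (\<forall>e\<in>E. 0 \<le> p e \<and> p e \<le> 1)"

text \<open>Probability of the live-edge graph phi (a subset of E) under the IC model.\<close>
definition real_prob :: "edge set \<Rightarrow> (edge \<Rightarrow> real) \<Rightarrow> edge set \<Rightarrow> real" where
  "real_prob E p \<phi> = (\<Prod>e\<in>\<phi>. p e) * (\<Prod>e\<in>E - \<phi>. 1 - p e)"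

definition reach :: "node set \<Rightarrow> edge set \<Rightarrow> node set" where
  "reach S \<phi> = \<phi>\<^sup>* `` S"

definition sigma :: "edge set \<Rightarrow> (edge \<Rightarrow> real) \<Rightarrow> node set \<Rightarrow> real" where
  "sigma E p S = (\<Sum>\<phi>\<in>Pow E. real_prob E p \<phi> * real (card (reach S \<phi>)))"

text \<open>A partial realization is the list of seeds selected so far
together with the set of observed live edges; under full-adoption feedback the observed
edges are exactly the edges of E leaving nodes reachable from the seeds, so the set of
observed live edges together with E determines the status of all observed edges.\<close>
type_synonym policy = "node list \<times> edge set \<Rightarrow> node option"

definition observed :: "node list \<Rightarrow> edge set \<Rightarrow> edge set" where
  "observed xs \<phi> = {e \<in> \<phi>. fst e \<in> reach (set xs) \<phi>}"

fun seeds_seq :: "policy \<Rightarrow> edge set \<Rightarrow> nat \<Rightarrow> node list" where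
  "seeds_seq \<pi> \<phi> 0 = []"
| "seeds_seq \<pi> \<phi> (Suc n) =
     (case \<pi> (seeds_seq \<pi> \<phi> n, observed (seeds_seq \<pi> \<phi> n) \<phi>) of
        None \<Rightarrow> seeds_seq \<pi> \<phi> n
      | Some u \<Rightarrow> seeds_seq \<pi> \<phi> n @ [u])"

definition policy_seeds :: "policy \<Rightarrow> edge set \<Rightarrow> node set" where
  "policy_seeds \<pi> \<phi> = (\<Union>n. set (seeds_seq \<pi> \<phi> n))"

definition policies :: "node set \<Rightarrow> node set \<Rightarrow> edge set \<Rightarrow> nat \<Rightarrow> policy set" where
  "policies L R E k = {\<pi>. \<forall>\<phi>\<in>Pow E. policy_seeds \<pi> \<phi> \<subseteq> L \<union> R
       \<and> finite (policy_seeds \<pi> \<phi>) \<and> card (policy_seeds \<pi> \<phi>) \<le> k}"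

definition sigma_pol :: "edge set \<Rightarrow> (edge \<Rightarrow> real) \<Rightarrow> policy \<Rightarrow> real" where
  "sigma_pol E p \<pi> = (\<Sum>\<phi>\<in>Pow E. real_prob E p \<phi> * real (card (reach (policy_seeds \<pi> \<phi>) \<phi>)))"

definition OPT_N :: "node set \<Rightarrow> node set \<Rightarrow> edge set \<Rightarrow> (edge \<Rightarrow> real) \<Rightarrow> nat \<Rightarrow> real" where
  "OPT_N L R E p k = Max {sigma E p S | S. S \<subseteq> L \<union> R \<and> card S \<le> k}"

definition OPT_A :: "node set \<Rightarrow> node set \<Rightarrow> edge set \<Rightarrow> (edge \<Rightarrow> real) \<Rightarrow> nat \<Rightarrow> real" where
  "OPT_A L R E p k = Sup (sigma_pol E p ` policies L R E k)"

end

theory Submission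
  imports Defs "HOL-Analysis.Convex"
begin



locale pspace =
  fixes E :: "edge set" and p :: "edge \<Rightarrow> real"
  assumes finE: "finite E" and p01: "\<And>e. e \<in> E \<Longrightarrow> 0 \<le> p e \<and> p e \<le> 1"
begin

abbreviation pr where "pr \<equiv> real_prob E p"

lemma pr_nonneg_gen: "F \<subseteq> E \<Longrightarrow> \<phi> \<subseteq> F \<Longrightarrow> 0 \<le> real_prob F p \<phi>"
  unfolding real_prob_def using p01
proof (intro mult_nonneg_nonneg prod_nonneg)
  fix x assume "F \<subseteq> E" "\<phi> \<subseteq> F" "x \<in> \<phi>" then show "0 \<le> p x" using p01 by blast
next
  fix x assume "F \<subseteq> E" "\<phi> \<subseteq> F" "x \<in> F - \<phi>" then have "x \<in> E" by blast
  then show "0 \<le> 1 - p x" using p01[of x] by linarith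
qed

lemma pr_nonneg: "\<phi> \<subseteq> E \<Longrightarrow> 0 \<le> pr \<phi>" using pr_nonneg_gen[of E] by simp

lemma pr_split:
  assumes "F \<subseteq> E" "A \<subseteq> E - F" "B \<subseteq> F"
  shows "pr (A \<union> B) = real_prob (E - F) p A * real_prob F p B"
proof -
  have fF: "finite F" using assms finE finite_subset by blast
  have fA: "finite A" using assms finE finite_subset by blast
  have fB: "finite B" using fF assms finite_subset by blast
  have d: "A \<inter> B = {}" using assms by blast
  have e1: "E - (A \<union> B) = ((E - F) - A) \<union> (F - B)" using assms by blast
  have d2: "((E - F) - A) \<inter> (F - B) = {}" by blast
  have "(\<Prod>e\<in>A \<union> B. p e) = (\<Prod>e\<in>A. p e) * (\<Prod>e\<in>B. p e)"
    using prod.union_disjoint[OF fA fB d] .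
  moreover have "(\<Prod>e\<in>E - (A \<union> B). 1 - p e) = (\<Prod>e\<in>(E-F)-A. 1 - p e) * (\<Prod>e\<in>F-B. 1 - p e)"
    unfolding e1 by (rule prod.union_disjoint) (use finE fF d2 in auto)
  ultimately show ?thesis unfolding real_prob_def by (simp add: algebra_simps)
qed

lemma sum_factor:
  assumes F: "F \<subseteq> E"
    and g: "\<And>\<phi>. \<phi> \<subseteq> E \<Longrightarrow> g \<phi> = g (\<phi> - F)"
    and h: "\<And>\<phi>. \<phi> \<subseteq> E \<Longrightarrow> h \<phi> = h (\<phi> \<inter> F)"
  shows "(\<Sum>\<phi>\<in>Pow E. pr \<phi> * (g \<phi> * h \<phi>)) =
     (\<Sum>A\<in>Pow (E - F). real_prob (E - F) p A * g A) * (\<Sum>B\<in>Pow F. real_prob F p B * h B)"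
proof -
  have fF: "finite F" using F finE finite_subset by blast
  have "(\<Sum>\<phi>\<in>Pow E. pr \<phi> * (g \<phi> * h \<phi>)) =
        (\<Sum>AB\<in>Pow (E - F) \<times> Pow F. pr (fst AB \<union> snd AB) * (g (fst AB \<union> snd AB) * h (fst AB \<union> snd AB)))"
    by (rule sum.reindex_bij_witness[where i = "\<lambda>AB. fst AB \<union> snd AB" and j = "\<lambda>\<phi>. (\<phi> - F, \<phi> \<inter> F)"])
      (use F in \<open>auto simp: Un_Diff_Int\<close>)
  also have "\<dots> = (\<Sum>AB\<in>Pow (E - F) \<times> Pow F. (real_prob (E - F) p (fst AB) * g (fst AB)) *
                     (real_prob F p (snd AB) * h (snd AB)))"
  proof (rule sum.cong[OF refl])
    fix AB assume "AB \<in> Pow (E - F) \<times> Pow F"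
    then obtain A B where AB: "AB = (A, B)" "A \<subseteq> E - F" "B \<subseteq> F" by auto
    have "(A \<union> B) - F = A" "(A \<union> B) \<inter> F = B" "A \<union> B \<subseteq> E" using AB F by blast+
    then have "g (A \<union> B) = g A" "h (A \<union> B) = h B" using g[of "A \<union> B"] h[of "A \<union> B"] by simp_all
    then show "pr (fst AB \<union> snd AB) * (g (fst AB \<union> snd AB) * h (fst AB \<union> snd AB)) =
         (real_prob (E - F) p (fst AB) * g (fst AB)) * (real_prob F p (snd AB) * h (snd AB))"
      using pr_split[OF F AB(2,3)] AB(1) by (simp add: algebra_simps)
  qed
  also have "\<dots> = (\<Sum>A\<in>Pow (E - F). real_prob (E - F) p A * g A) * (\<Sum>B\<in>Pow F. real_prob F p B * h B)"
    by (simp add: sum_product sum.cartesian_product case_prod_beta)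
  finally show ?thesis .
qed

lemma sum1_gen: assumes "F \<subseteq> E" shows "(\<Sum>B\<in>Pow F. real_prob F p B) = 1"
proof -
  have fF: "finite F" using assms finE finite_subset by blast
  have "(\<Prod>e\<in>F. p e + (1 - p e)) = (\<Sum>B\<in>Pow F. real_prob F p B)"
    unfolding real_prob_def by (rule prod_add[OF fF])
  then show ?thesis by simp
qed

lemma sum1: "(\<Sum>\<phi>\<in>Pow E. pr \<phi>) = 1" using sum1_gen[of E] by simp

lemma indep:
  assumes F: "F \<subseteq> E"
    and g: "\<And>\<phi>. \<phi> \<subseteq> E \<Longrightarrow> g \<phi> = g (\<phi> - F)"
    and h: "\<And>\<phi>. \<phi> \<subseteq> E \<Longrightarrow> h \<phi> = h (\<phi> \<inter> F)"
  shows "(\<Sum>\<phi>\<in>Pow E. pr \<phi> * (g \<phi> * h \<phi>)) =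
     (\<Sum>\<phi>\<in>Pow E. pr \<phi> * g \<phi>) * (\<Sum>\<phi>\<in>Pow E. pr \<phi> * h \<phi>)"
proof -
  have a: "(\<Sum>\<phi>\<in>Pow E. pr \<phi> * (g \<phi> * (\<lambda>_. 1) \<phi>)) =
     (\<Sum>A\<in>Pow (E - F). real_prob (E - F) p A * g A) * (\<Sum>B\<in>Pow F. real_prob F p B * 1)"
    by (rule sum_factor[where F=F and g=g and h="\<lambda>_. 1"]) (use F g in auto)
  have b: "(\<Sum>\<phi>\<in>Pow E. pr \<phi> * ((\<lambda>_. 1) \<phi> * h \<phi>)) =
     (\<Sum>A\<in>Pow (E - F). real_prob (E - F) p A * 1) * (\<Sum>B\<in>Pow F. real_prob F p B * h B)"
    by (rule sum_factor[where F=F and h=h and g="\<lambda>_. 1"]) (use F h in auto)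
  have c: "(\<Sum>A\<in>Pow (E - F). real_prob (E - F) p A) = 1" by (rule sum1_gen) auto
  have d: "(\<Sum>\<phi>\<in>Pow E. pr \<phi> * (g \<phi> * h \<phi>)) =
     (\<Sum>A\<in>Pow (E - F). real_prob (E - F) p A * g A) * (\<Sum>B\<in>Pow F. real_prob F p B * h B)"
    by (rule sum_factor[where F=F and h=h and g=g]) (use F g h in auto)
  show ?thesis using d a b c sum1_gen[OF F] by simp
qed

lemma expect_h:
  assumes F: "F \<subseteq> E"
    and h: "\<And>\<phi>. \<phi> \<subseteq> E \<Longrightarrow> h \<phi> = h (\<phi> \<inter> F)"
  shows "(\<Sum>\<phi>\<in>Pow E. pr \<phi> * h \<phi>) = (\<Sum>B\<in>Pow F. real_prob F p B * h B)"
proof -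
  have b: "(\<Sum>\<phi>\<in>Pow E. pr \<phi> * ((\<lambda>_. 1) \<phi> * h \<phi>)) =
     (\<Sum>A\<in>Pow (E - F). real_prob (E - F) p A * 1) * (\<Sum>B\<in>Pow F. real_prob F p B * h B)"
    by (rule sum_factor[where F=F and h=h and g="\<lambda>_. 1"]) (use F h in auto)
  have c: "(\<Sum>A\<in>Pow (E - F). real_prob (E - F) p A) = 1" by (rule sum1_gen) auto
  show ?thesis using b c by simp
qed

lemma avoid:
  assumes F: "F \<subseteq> E"
  shows "(\<Sum>\<phi>\<in>Pow E. pr \<phi> * (if \<phi> \<inter> F = {} then 1 else 0)) = (\<Prod>e\<in>F. 1 - p e)"
proof -
  have fF: "finite F" using assms finE finite_subset by blast
  have "(\<Sum>\<phi>\<in>Pow E. pr \<phi> * (if \<phi> \<inter> F = {} then 1 else 0)) =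
        (\<Sum>B\<in>Pow F. real_prob F p B * (if B \<inter> F = {} then 1 else 0))"
    by (rule expect_h[OF F]) auto
  also have "\<dots> = (\<Sum>B\<in>{{}}. real_prob F p B * (if B \<inter> F = {} then 1 else 0))"
    by (rule sum.mono_neutral_right) (use fF in auto)
  also have "\<dots> = (\<Prod>e\<in>F. 1 - p e)" by (simp add: real_prob_def)
  finally show ?thesis .
qed

lemma edge_prob:
  assumes e: "e \<in> E"
  shows "(\<Sum>\<phi>\<in>Pow E. pr \<phi> * (if e \<in> \<phi> then 1 else 0)) = p e"
proof -
  have "(\<Sum>\<phi>\<in>Pow E. pr \<phi> * (if e \<in> \<phi> then 1 else 0)) =
        (\<Sum>B\<in>Pow {e}. real_prob {e} p B * (if e \<in> B then 1 else 0))"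
    by (rule expect_h) (use e in auto)
  also have "\<dots> = (\<Sum>B\<in>{{e}}. real_prob {e} p B * (if e \<in> B then 1 else 0))"
    by (rule sum.mono_neutral_right) auto
  also have "\<dots> = p e" by (simp add: real_prob_def)
  finally show ?thesis .
qed

end



locale bip =
  fixes L R :: "node set" and E :: "edge set" and p :: "edge \<Rightarrow> real"
  assumes bg: "bip_graph L R E p"
begin

lemma finL: "finite L" and finR: "finite R" and disj: "L \<inter> R = {}" and ELR: "E \<subseteq> L \<times> R"
  and p01': "\<And>e. e \<in> E \<Longrightarrow> 0 \<le> p e \<and> p e \<le> 1"
  using bg unfolding bip_graph_def by auto

lemma finE': "finite E" using ELR finL finR finite_subset by blast

sublocale pspace E p using finE' p01' by unfold_locales auto

lemma reach_bip:
  assumes "\<phi> \<subseteq> E" shows "reach S \<phi> = S \<union> \<phi> `` S"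
proof
  show "S \<union> \<phi> `` S \<subseteq> reach S \<phi>" unfolding reach_def by auto
  show "reach S \<phi> \<subseteq> S \<union> \<phi> `` S"
  proof
    fix b assume "b \<in> reach S \<phi>"
    then obtain a where a: "a \<in> S" "(a, b) \<in> \<phi>\<^sup>*" unfolding reach_def by auto
    from a(2) show "b \<in> S \<union> \<phi> `` S"
    proof (induction rule: rtrancl_induct)
      case base then show ?case using a by auto
    next
      case (step y z)
      have "y \<in> L" "z \<in> R" using step(2) assms ELR by auto
      have "y \<notin> \<phi> `` S"
      proof
        assume "y \<in> \<phi> `` S" then have "y \<in> R" using assms ELR by blast
        then show False using \<open>y \<in> L\<close> disj by blast
      qed
      with step(3) have "y \<in> S" by blast
      then show ?case using step(2) by auto
    qed
  qed
qed

lemma reach_sub: "\<phi> \<subseteq> E \<Longrightarrow> S \<subseteq> L \<union> R \<Longrightarrow> reach S \<phi> \<subseteq> L \<union> R"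
  using reach_bip ELR by auto

lemma observed_bip:
  assumes "\<phi> \<subseteq> E" shows "observed xs \<phi> = {e \<in> \<phi>. fst e \<in> set xs}"
proof -
  have "fst e \<notin> \<phi> `` set xs" if "e \<in> \<phi>" for e
  proof
    assume "fst e \<in> \<phi> `` set xs"
    then have "fst e \<in> R" using assms ELR by auto
    moreover have "fst e \<in> L" using that assms ELR by auto
    ultimately show False using disj by auto
  qed
  then show ?thesis unfolding observed_def using reach_bip[OF assms] by auto
qed

definition agree :: "node \<Rightarrow> edge set \<Rightarrow> edge set \<Rightarrow> bool" where
  "agree u \<phi> \<phi>' \<longleftrightarrow> (\<forall>e. fst e \<noteq> u \<longrightarrow> (e \<in> \<phi> \<longleftrightarrow> e \<in> \<phi>'))"

lemma observed_agree:
  assumes "\<phi> \<subseteq> E" "\<phi>' \<subseteq> E" "agree u \<phi> \<phi>'" "u \<notin> set xs"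
  shows "observed xs \<phi> = observed xs \<phi>'"
proof -
  have "\<And>e. fst e \<in> set xs \<Longrightarrow> (e \<in> \<phi> \<longleftrightarrow> e \<in> \<phi>')" using assms(3,4) unfolding agree_def by metis
  then show ?thesis unfolding observed_bip[OF assms(1)] observed_bip[OF assms(2)] by blast
qed

lemma seq_append: "\<exists>ys. seeds_seq \<pi> \<phi> (Suc n) = seeds_seq \<pi> \<phi> n @ ys"
  by (auto split: option.splits)

lemma seq_tw:
  assumes "\<phi> \<subseteq> E" "\<phi>' \<subseteq> E" "agree u \<phi> \<phi>'"
  shows "takeWhile (\<lambda>x. x \<noteq> u) (seeds_seq \<pi> \<phi> n) = takeWhile (\<lambda>x. x \<noteq> u) (seeds_seq \<pi> \<phi>' n)
       \<and> (u \<in> set (seeds_seq \<pi> \<phi> n) \<longleftrightarrow> u \<in> set (seeds_seq \<pi> \<phi>' n))"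
proof (induction n)
  case 0 then show ?case by simp
next
  case (Suc n)
  show ?case
  proof (cases "u \<in> set (seeds_seq \<pi> \<phi> n)")
    case True
    then have T': "u \<in> set (seeds_seq \<pi> \<phi>' n)" using Suc.IH by (simp del: seeds_seq.simps)
    obtain ys where ys: "seeds_seq \<pi> \<phi> (Suc n) = seeds_seq \<pi> \<phi> n @ ys" using seq_append by blast
    obtain ys' where ys': "seeds_seq \<pi> \<phi>' (Suc n) = seeds_seq \<pi> \<phi>' n @ ys'" using seq_append by blast
    have "takeWhile (\<lambda>x. x \<noteq> u) (seeds_seq \<pi> \<phi> (Suc n)) = takeWhile (\<lambda>x. x \<noteq> u) (seeds_seq \<pi> \<phi> n)"
      unfolding ys using True by (simp add: takeWhile_append1)
    moreover have "takeWhile (\<lambda>x. x \<noteq> u) (seeds_seq \<pi> \<phi>' (Suc n)) = takeWhile (\<lambda>x. x \<noteq> u) (seeds_seq \<pi> \<phi>' n)"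
      unfolding ys' using T' by (simp add: takeWhile_append1)
    moreover have "u \<in> set (seeds_seq \<pi> \<phi> (Suc n))" unfolding ys using True by simp
    moreover have "u \<in> set (seeds_seq \<pi> \<phi>' (Suc n))" unfolding ys' using T' by simp
    ultimately show ?thesis using Suc.IH by (simp del: seeds_seq.simps)
  next
    case False
    then have F': "u \<notin> set (seeds_seq \<pi> \<phi>' n)" using Suc.IH by (simp del: seeds_seq.simps)
    have "seeds_seq \<pi> \<phi> n = seeds_seq \<pi> \<phi>' n"
    proof -
      have "takeWhile (\<lambda>x. x \<noteq> u) (seeds_seq \<pi> \<phi> n) = seeds_seq \<pi> \<phi> n"
        using False by (simp add: takeWhile_eq_all_conv) metis
      moreover have "takeWhile (\<lambda>x. x \<noteq> u) (seeds_seq \<pi> \<phi>' n) = seeds_seq \<pi> \<phi>' n"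
        using F' by (simp add: takeWhile_eq_all_conv) metis
      ultimately show ?thesis using Suc.IH by (metis (no_types))
    qed
    moreover have "observed (seeds_seq \<pi> \<phi> n) \<phi> = observed (seeds_seq \<pi> \<phi> n) \<phi>'"
      by (rule observed_agree[OF assms False])
    ultimately have "seeds_seq \<pi> \<phi> (Suc n) = seeds_seq \<pi> \<phi>' (Suc n)" by (simp only: seeds_seq.simps)
    then show ?thesis using Suc.IH by (metis (no_types))
  qed
qed

lemma seeds_agree:
  assumes "\<phi> \<subseteq> E" "\<phi>' \<subseteq> E" "agree u \<phi> \<phi>'"
  shows "u \<in> policy_seeds \<pi> \<phi> \<longleftrightarrow> u \<in> policy_seeds \<pi> \<phi>'"
  using seq_tw[OF assms, of \<pi>] unfolding policy_seeds_def by (simp only: UN_iff)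

definition outE :: "node \<Rightarrow> edge set" where "outE u = {e \<in> E. fst e = u}"

lemma outE_sub: "outE u \<subseteq> E" unfolding outE_def by auto

lemma agree_out: "\<phi> \<subseteq> E \<Longrightarrow> agree u \<phi> (\<phi> - outE u)"
  unfolding agree_def outE_def by auto

lemma indep_seed:
  assumes "(u, w) \<in> E"
  shows "(\<Sum>\<phi>\<in>Pow E. pr \<phi> * ((if u \<in> policy_seeds \<pi> \<phi> then 1 else 0) * (if (u, w) \<in> \<phi> then 1 else 0)))
       = (\<Sum>\<phi>\<in>Pow E. pr \<phi> * (if u \<in> policy_seeds \<pi> \<phi> then 1 else 0)) * p (u, w)"
proof -
  have "(\<Sum>\<phi>\<in>Pow E. pr \<phi> * ((if u \<in> policy_seeds \<pi> \<phi> then 1 else 0) * (if (u, w) \<in> \<phi> then 1 else 0)))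
     = (\<Sum>\<phi>\<in>Pow E. pr \<phi> * (if u \<in> policy_seeds \<pi> \<phi> then 1 else 0)) *
       (\<Sum>\<phi>\<in>Pow E. pr \<phi> * (if (u, w) \<in> \<phi> then 1 else 0))"
  proof (rule indep[OF outE_sub])
    fix \<phi> assume "\<phi> \<subseteq> E"
    then show "(if u \<in> policy_seeds \<pi> \<phi> then 1 else 0) = (if u \<in> policy_seeds \<pi> (\<phi> - outE u) then 1 else (0::real))"
    proof -
      have "\<phi> - outE u \<subseteq> E" using \<open>\<phi> \<subseteq> E\<close> by blast
      then show ?thesis using seeds_agree[OF \<open>\<phi> \<subseteq> E\<close> _ agree_out[OF \<open>\<phi> \<subseteq> E\<close>], where \<pi>=\<pi>] by simp
    qed
  next
    fix \<phi> show "(if (u, w) \<in> \<phi> then 1 else 0) = (if (u, w) \<in> \<phi> \<inter> outE u then 1 else (0::real))"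
      using assms unfolding outE_def by auto
  qed
  then show ?thesis using edge_prob[OF assms] by simp
qed

end



lemma exp_chord: fixes a :: real assumes "0 \<le> a" "a \<le> 1" shows "exp (-a) \<le> 1 - a + a * exp (-1)"
proof -
  have "exp ((1 - a) *\<^sub>R 0 + a *\<^sub>R (-1)) \<le> (1 - a) * exp 0 + a * exp (-1)"
    by (rule convex_onD[OF exp_convex]) (use assms in auto)
  then show ?thesis by simp
qed

lemma one_minus_exp_ge: fixes a :: real assumes "0 \<le> a"
  shows "(1 - exp (-1)) * min 1 a \<le> 1 - exp (-a)"
proof (cases "a \<le> 1")
  case True then show ?thesis using exp_chord[OF assms True] by (simp add: algebra_simps)
next
  case False then have "exp (-a) \<le> exp (-1)" by simp
  then show ?thesis using False by simp
qed

locale cov =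
  fixes N :: "nat set" and pp :: "nat \<Rightarrow> nat \<Rightarrow> real"
  assumes finN: "finite N" and pp01: "\<And>u w. 0 \<le> pp u w \<and> pp u w \<le> 1"
begin

definition FF :: "(nat \<Rightarrow> real) \<Rightarrow> real" where
  "FF x = (\<Sum>w\<in>N. 1 - (\<Prod>u\<in>N. 1 - x u * pp u w))"

definition ind :: "nat set \<Rightarrow> nat \<Rightarrow> real" where "ind S u = (if u \<in> S then 1 else 0)"

lemma FF_ind: assumes "S \<subseteq> N" shows "FF (ind S) = (\<Sum>w\<in>N. 1 - (\<Prod>u\<in>S. 1 - pp u w))"
  unfolding FF_def
proof (rule sum.cong[OF refl])
  fix w
  have "(\<Prod>u\<in>N. 1 - ind S u * pp u w) = (\<Prod>u\<in>S. 1 - ind S u * pp u w)"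
    by (rule prod.mono_neutral_right) (use finN assms in \<open>auto simp: ind_def\<close>)
  also have "\<dots> = (\<Prod>u\<in>S. 1 - pp u w)" by (rule prod.cong) (auto simp: ind_def)
  finally show "1 - (\<Prod>u\<in>N. 1 - ind S u * pp u w) = 1 - (\<Prod>u\<in>S. 1 - pp u w)" by simp
qed

lemma FF_mono:
  assumes "\<And>u. u \<in> N \<Longrightarrow> 0 \<le> x u \<and> x u \<le> y u \<and> y u \<le> 1"
  shows "FF x \<le> FF y"
  unfolding FF_def
proof (rule sum_mono)
  fix w
  have "(\<Prod>u\<in>N. 1 - y u * pp u w) \<le> (\<Prod>u\<in>N. 1 - x u * pp u w)"
  proof (rule prod_mono)
    fix u assume u: "u \<in> N"
    have "y u * pp u w \<le> 1" using assms[OF u] pp01[of u w] by (simp add: mult_le_one)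
    moreover have "x u * pp u w \<le> y u * pp u w" using assms[OF u] pp01[of u w] by (simp add: mult_right_mono)
    ultimately show "0 \<le> 1 - y u * pp u w \<and> 1 - y u * pp u w \<le> 1 - x u * pp u w" by simp
  qed
  then show "1 - (\<Prod>u\<in>N. 1 - x u * pp u w) \<le> 1 - (\<Prod>u\<in>N. 1 - y u * pp u w)" by simp
qed

lemma FF_apx:
  assumes "\<And>u. u \<in> N \<Longrightarrow> 0 \<le> x u \<and> x u \<le> 1"
  shows "(1 - exp (-1)) * (\<Sum>w\<in>N. min 1 (\<Sum>u\<in>N. x u * pp u w)) \<le> FF x"
  unfolding FF_def sum_distrib_left
proof (rule sum_mono)
  fix w
  have a0: "0 \<le> (\<Sum>u\<in>N. x u * pp u w)" using assms pp01 by (intro sum_nonneg) simp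
  have "(\<Prod>u\<in>N. 1 - x u * pp u w) \<le> (\<Prod>u\<in>N. exp (- (x u * pp u w)))"
  proof (rule prod_mono)
    fix u assume u: "u \<in> N"
    have "x u * pp u w \<le> 1" using assms[OF u] pp01[of u w] by (simp add: mult_le_one)
    then show "0 \<le> 1 - x u * pp u w \<and> 1 - x u * pp u w \<le> exp (- (x u * pp u w))"
      using exp_ge_add_one_self[of "- (x u * pp u w)"] by simp
  qed
  also have "\<dots> = exp (- (\<Sum>u\<in>N. x u * pp u w))"
    by (simp add: exp_sum[OF finN, symmetric] sum_negf)
  finally show "(1 - exp (-1)) * min 1 (\<Sum>u\<in>N. x u * pp u w) \<le> 1 - (\<Prod>u\<in>N. 1 - x u * pp u w)"
    using one_minus_exp_ge[OF a0] by linarith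
qed

definition frac :: "(nat \<Rightarrow> real) \<Rightarrow> nat set" where "frac x = {u \<in> N. 0 < x u \<and> x u < 1}"

lemma quad_max:
  fixes a b c t1 t2 :: real
  assumes "0 \<le> a" "t1 \<le> 0" "0 \<le> t2"
  shows "c \<le> c + b * t1 + a * t1^2 \<or> c \<le> c + b * t2 + a * t2^2"
proof (cases "0 \<le> b")
  case True
  then have "0 \<le> b * t2 + a * t2^2" using assms by simp
  then show ?thesis by simp
next
  case False
  have "a * t1 \<le> 0" using assms by (simp add: mult_nonneg_nonpos)
  then have "0 \<le> t1 * (b + a * t1)" using assms False
    by (intro mult_nonpos_nonpos) auto
  then show ?thesis by (simp add: algebra_simps power2_eq_square)
qed

lemma FF_line:
  assumes ij: "i \<in> N" "j \<in> N" "i \<noteq> j" and x01: "\<And>u. u \<in> N \<Longrightarrow> 0 \<le> x u \<and> x u \<le> 1"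
  shows "\<exists>a b. 0 \<le> a \<and> (\<forall>t. FF (x(i := x i + t, j := x j - t)) = FF x + b * t + a * t^2)"
proof -
  define C where "C w = (\<Prod>u\<in>N - {i} - {j}. 1 - x u * pp u w)" for w
  have C0: "0 \<le> C w" for w unfolding C_def
  proof (rule prod_nonneg)
    fix u assume "u \<in> N - {i} - {j}"
    then have "x u * pp u w \<le> 1" using x01[of u] pp01[of u w] by (simp add: mult_le_one)
    then show "0 \<le> 1 - x u * pp u w" by simp
  qed
  have split: "(\<Prod>u\<in>N. 1 - y u * pp u w) = (1 - y i * pp i w) * ((1 - y j * pp j w) * (\<Prod>u\<in>N - {i} - {j}. 1 - y u * pp u w))" for y w
  proof -
    have "(\<Prod>u\<in>N. 1 - y u * pp u w) = (1 - y i * pp i w) * (\<Prod>u\<in>N - {i}. 1 - y u * pp u w)"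
      by (rule prod.remove[OF finN ij(1)])
    moreover have "(\<Prod>u\<in>N - {i}. 1 - y u * pp u w) = (1 - y j * pp j w) * (\<Prod>u\<in>N - {i} - {j}. 1 - y u * pp u w)"
      by (rule prod.remove) (use finN ij in auto)
    ultimately show ?thesis by simp
  qed
  define y where "y t = x(i := x i + t, j := x j - t)" for t
  have Cy: "(\<Prod>u\<in>N - {i} - {j}. 1 - y t u * pp u w) = C w" for t w
    unfolding C_def y_def by (rule prod.cong) auto
  define a where "a = (\<Sum>w\<in>N. C w * pp i w * pp j w)"
  define b where "b = (\<Sum>w\<in>N. - C w * ((1 - x i * pp i w) * pp j w - (1 - x j * pp j w) * pp i w))"
  have "FF (y t) = FF x + b * t + a * t^2" for t
  proof -
    have "FF (y t) = (\<Sum>w\<in>N. (1 - (1 - x i * pp i w) * ((1 - x j * pp j w) * C w))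
          + t * (- C w * ((1 - x i * pp i w) * pp j w - (1 - x j * pp j w) * pp i w))
          + t^2 * (C w * pp i w * pp j w))"
      unfolding FF_def
    proof (rule sum.cong[OF refl])
      fix w
      have yi: "y t i = x i + t" and yj: "y t j = x j - t" unfolding y_def using ij by auto
      show "1 - (\<Prod>u\<in>N. 1 - y t u * pp u w) = (1 - (1 - x i * pp i w) * ((1 - x j * pp j w) * C w))
          + t * (- C w * ((1 - x i * pp i w) * pp j w - (1 - x j * pp j w) * pp i w))
          + t^2 * (C w * pp i w * pp j w)"
        unfolding split[of "y t"] Cy yi yj by (simp add: algebra_simps power2_eq_square)
    qed
    also have "\<dots> = (\<Sum>w\<in>N. 1 - (1 - x i * pp i w) * ((1 - x j * pp j w) * C w)) + b * t + a * t^2"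
    proof -
      let ?A = "\<lambda>w. 1 - (1 - x i * pp i w) * ((1 - x j * pp j w) * C w)"
      let ?B = "\<lambda>w. - C w * ((1 - x i * pp i w) * pp j w - (1 - x j * pp j w) * pp i w)"
      let ?G = "\<lambda>w. C w * pp i w * pp j w"
      have "(\<Sum>w\<in>N. ?A w + t * ?B w + t^2 * ?G w) = (\<Sum>w\<in>N. ?A w) + (\<Sum>w\<in>N. t * ?B w) + (\<Sum>w\<in>N. t^2 * ?G w)"
        by (simp only: sum.distrib)
      also have "\<dots> = (\<Sum>w\<in>N. ?A w) + t * (\<Sum>w\<in>N. ?B w) + t^2 * (\<Sum>w\<in>N. ?G w)"
        by (simp only: sum_distrib_left)
      finally show ?thesis unfolding a_def b_def by (simp only: mult.commute)
    qed
    also have "(\<Sum>w\<in>N. 1 - (1 - x i * pp i w) * ((1 - x j * pp j w) * C w)) = FF x"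
      unfolding FF_def C_def using split[of x] by simp
    finally show ?thesis .
  qed
  moreover have "0 \<le> a" unfolding a_def using C0 pp01 by (intro sum_nonneg) simp
  ultimately show ?thesis unfolding y_def by blast
qed

lemma pipage_step:
  assumes x01: "\<And>u. u \<in> N \<Longrightarrow> 0 \<le> x u \<and> x u \<le> 1" and two: "2 \<le> card (frac x)"
  shows "\<exists>y. (\<forall>u\<in>N. 0 \<le> y u \<and> y u \<le> 1) \<and> (\<Sum>u\<in>N. y u) = (\<Sum>u\<in>N. x u)
            \<and> card (frac y) < card (frac x) \<and> FF x \<le> FF y"
proof -
  have finf: "finite (frac x)" using finN unfolding frac_def by auto
  have "frac x \<noteq> {}" using two by (intro notI) simp
  then obtain i where i: "i \<in> frac x" by blast
  have "1 \<le> card (frac x - {i})" using two i finf by (simp add: card_Diff_singleton)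
  then have "frac x - {i} \<noteq> {}" by (intro notI) simp
  then obtain j where j: "j \<in> frac x - {i}" by blast
  have iN: "i \<in> N" and jN: "j \<in> N" and ij: "i \<noteq> j" using i j unfolding frac_def by auto
  have xi: "0 < x i" "x i < 1" and xj: "0 < x j" "x j < 1" using i j unfolding frac_def by auto
  from FF_line[where x=x, OF iN jN ij x01] obtain a b where a0: "0 \<le> a" and line: "\<forall>t. FF (x(i := x i + t, j := x j - t)) = FF x + b * t + a * t^2"
    by blast
  define y where "y t = x(i := x i + t, j := x j - t)" for t
  have yi: "y t i = x i + t" and yj: "y t j = x j - t" and yo: "\<And>u. u \<noteq> i \<Longrightarrow> u \<noteq> j \<Longrightarrow> y t u = x u" for t
    unfolding y_def using ij by auto
  have ysum: "(\<Sum>u\<in>N. y t u) = (\<Sum>u\<in>N. x u)" for t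
  proof -
    have "(\<Sum>u\<in>N. y t u) = y t i + (y t j + (\<Sum>u\<in>N - {i} - {j}. y t u))"
      using sum.remove[OF finN iN, of "y t"] sum.remove[of "N - {i}" j "y t"] finN jN ij by simp
    moreover have "(\<Sum>u\<in>N. x u) = x i + (x j + (\<Sum>u\<in>N - {i} - {j}. x u))"
      using sum.remove[OF finN iN, of x] sum.remove[of "N - {i}" j x] finN jN ij by simp
    moreover have "(\<Sum>u\<in>N - {i} - {j}. y t u) = (\<Sum>u\<in>N - {i} - {j}. x u)"
      by (rule sum.cong) (auto simp: yo)
    ultimately show ?thesis using yi yj by simp
  qed
  have fsub: "frac (y t) \<subseteq> frac x \<union> {i, j}" for t unfolding frac_def using yo by auto
  define t1 where "t1 = - min (x i) (1 - x j)"
  define t2 where "t2 = min (1 - x i) (x j)"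
  have t1: "t1 \<le> 0" and t2: "0 \<le> t2" unfolding t1_def t2_def using xi xj by auto
  have y1: "\<forall>u\<in>N. 0 \<le> y t1 u \<and> y t1 u \<le> 1"
  proof
    fix u assume u: "u \<in> N"
    show "0 \<le> y t1 u \<and> y t1 u \<le> 1"
      using x01[OF u] xi xj yi yj yo[of u] unfolding t1_def by (cases "u = i"; cases "u = j") auto
  qed
  have y2: "\<forall>u\<in>N. 0 \<le> y t2 u \<and> y t2 u \<le> 1"
  proof
    fix u assume u: "u \<in> N"
    show "0 \<le> y t2 u \<and> y t2 u \<le> 1"
      using x01[OF u] xi xj yi yj yo[of u] unfolding t2_def by (cases "u = i"; cases "u = j") auto
  qed
  have c1: "card (frac (y t1)) < card (frac x)"
  proof -
    have "i \<notin> frac (y t1) \<or> j \<notin> frac (y t1)"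
      unfolding frac_def using yi yj unfolding t1_def by (auto simp: min_def split: if_splits)
    then have "frac (y t1) \<subset> frac x" using fsub[of t1] i j by auto
    then show ?thesis using finf psubset_card_mono by blast
  qed
  have c2: "card (frac (y t2)) < card (frac x)"
  proof -
    have "i \<notin> frac (y t2) \<or> j \<notin> frac (y t2)"
      unfolding frac_def using yi yj unfolding t2_def by (auto simp: min_def split: if_splits)
    then have "frac (y t2) \<subset> frac x" using fsub[of t2] i j by auto
    then show ?thesis using finf psubset_card_mono by blast
  qed
  have "FF x \<le> FF (y t1) \<or> FF x \<le> FF (y t2)"
    using quad_max[OF a0 t1 t2, of "FF x" b] line unfolding y_def by simp
  then show ?thesis using y1 y2 c1 c2 ysum by blast
qed

lemma pipage_base:
  assumes x01: "\<And>u. u \<in> N \<Longrightarrow> 0 \<le> x u \<and> x u \<le> 1" and one: "card (frac x) \<le> 1"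
    and sk: "(\<Sum>u\<in>N. x u) \<le> real k"
  shows "\<exists>S\<subseteq>N. card S \<le> k \<and> FF x \<le> FF (ind S)"
proof -
  define S where "S = {u \<in> N. 0 < x u}"
  define O1 where "O1 = {u \<in> N. x u = 1}"
  have finf: "finite (frac x)" using finN unfolding frac_def by auto
  have fO: "finite O1" using finN unfolding O1_def by auto
  have SU: "S = O1 \<union> frac x" and dj: "O1 \<inter> frac x = {}"
    unfolding S_def O1_def frac_def using x01 by force+
  have "FF x \<le> FF (ind S)"
    by (rule FF_mono) (use x01 in \<open>auto simp: ind_def S_def\<close>)
  moreover have "card S \<le> k"
  proof -
    have "(\<Sum>u\<in>N. x u) \<ge> (\<Sum>u\<in>O1 \<union> frac x. x u)"
      by (rule sum_mono2[OF finN]) (use x01 in \<open>auto simp: O1_def frac_def\<close>)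
    also have "(\<Sum>u\<in>O1 \<union> frac x. x u) = (\<Sum>u\<in>O1. x u) + (\<Sum>u\<in>frac x. x u)"
      by (rule sum.union_disjoint[OF fO finf dj])
    also have "(\<Sum>u\<in>O1. x u) = real (card O1)" unfolding O1_def by simp
    finally have A: "real (card O1) + (\<Sum>u\<in>frac x. x u) \<le> real k" using sk by linarith
    have cS: "card S = card O1 + card (frac x)" unfolding SU using card_Un_disjoint[OF fO finf dj] .
    show ?thesis
    proof (cases "frac x = {}")
      case True
      then show ?thesis using A cS by simp
    next
      case False
      then obtain i where i: "i \<in> frac x" by blast
      have "\<forall>a\<in>frac x. \<forall>b\<in>frac x. a = b" using one card_le_Suc0_iff_eq[OF finf] by simp
      then have "frac x = {i}" using i by blast
      moreover have "0 < x i" using i unfolding frac_def by auto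
      ultimately show ?thesis using A cS by simp
    qed
  qed
  moreover have "S \<subseteq> N" unfolding S_def by auto
  ultimately show ?thesis by blast
qed

lemma pipage:
  "\<forall>x. (\<forall>u\<in>N. 0 \<le> x u \<and> x u \<le> 1) \<longrightarrow> card (frac x) = m \<longrightarrow> (\<Sum>u\<in>N. x u) \<le> real k
     \<longrightarrow> (\<exists>S\<subseteq>N. card S \<le> k \<and> FF x \<le> FF (ind S))"
proof (induction m rule: less_induct)
  case (less m)
  show ?case
  proof (intro allI impI)
    fix x assume x01: "\<forall>u\<in>N. 0 \<le> x u \<and> x u \<le> 1" and cm: "card (frac x) = m" and sk: "(\<Sum>u\<in>N. x u) \<le> real k"
    show "\<exists>S\<subseteq>N. card S \<le> k \<and> FF x \<le> FF (ind S)"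
    proof (cases "card (frac x) \<le> 1")
      case True then show ?thesis using pipage_base x01 sk by blast
    next
      case False
      then obtain y where y: "\<forall>u\<in>N. 0 \<le> y u \<and> y u \<le> 1" "(\<Sum>u\<in>N. y u) = (\<Sum>u\<in>N. x u)"
          "card (frac y) < card (frac x)" "FF x \<le> FF y"
        using pipage_step[of x] x01 False by (metis (no_types, lifting) not_less_eq_eq numeral_2_eq_2 One_nat_def)
      then obtain S where "S \<subseteq> N" "card S \<le> k" "FF y \<le> FF (ind S)"
      proof -
        have "card (frac y) < m" using y(3) cm by simp
        then have "\<forall>x. (\<forall>u\<in>N. 0 \<le> x u \<and> x u \<le> 1) \<longrightarrow> card (frac x) = card (frac y) \<longrightarrow> (\<Sum>u\<in>N. x u) \<le> real k
           \<longrightarrow> (\<exists>S\<subseteq>N. card S \<le> k \<and> FF x \<le> FF (ind S))" by (rule less.IH)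
        then have "\<exists>S\<subseteq>N. card S \<le> k \<and> FF y \<le> FF (ind S)" using y(1,2) sk by simp
        then show ?thesis using that by blast
      qed
      then show ?thesis using y(4) by (meson order.trans)
    qed
  qed
qed

lemma main_round:
  assumes x01: "\<And>u. u \<in> N \<Longrightarrow> 0 \<le> x u \<and> x u \<le> 1" and sk: "(\<Sum>u\<in>N. x u) \<le> real k"
  shows "\<exists>S\<subseteq>N. card S \<le> k \<and>
     (1 - exp (-1)) * (\<Sum>w\<in>N. min 1 (\<Sum>u\<in>N. x u * pp u w)) \<le> (\<Sum>w\<in>N. 1 - (\<Prod>u\<in>S. 1 - pp u w))"
proof -
  obtain S where S: "S \<subseteq> N" "card S \<le> k" "FF x \<le> FF (ind S)"
    using pipage[of "card (frac x)"] x01 sk by blast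
  have "(1 - exp (-1)) * (\<Sum>w\<in>N. min 1 (\<Sum>u\<in>N. x u * pp u w)) \<le> FF x" by (rule FF_apx[OF x01])
  also have "\<dots> \<le> FF (ind S)" by (rule S(3))
  also have "\<dots> = (\<Sum>w\<in>N. 1 - (\<Prod>u\<in>S. 1 - pp u w))" by (rule FF_ind[OF S(1)])
  finally show ?thesis using S(1,2) by blast
qed

end



lemma card_as_sum: "finite B \<Longrightarrow> A \<subseteq> B \<Longrightarrow> real (card A) = (\<Sum>w\<in>B. if w \<in> A then 1 else 0)"
proof -
  assume "finite B" "A \<subseteq> B"
  then have "(\<Sum>w\<in>B. if w \<in> A then 1 else (0::real)) = (\<Sum>w\<in>B \<inter> A. 1)"
    by (simp add: sum.inter_filter[symmetric]) (metis Collect_mem_eq Int_def)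
  also have "B \<inter> A = A" using \<open>A \<subseteq> B\<close> by blast
  finally show ?thesis by simp
qed

context bip
begin

abbreviation NN where "NN \<equiv> L \<union> R"

definition pp :: "node \<Rightarrow> node \<Rightarrow> real" where
  "pp u w = (if u = w then 1 else if (u, w) \<in> E then p (u, w) else 0)"

lemma pp01: "0 \<le> pp u w \<and> pp u w \<le> 1" unfolding pp_def using p01' by auto

lemma finNN: "finite NN" using finL finR by auto

sublocale cov NN pp using finNN pp01 by unfold_locales auto

lemma pr_sum_le1: "(\<Sum>\<phi>\<in>Pow E. pr \<phi> * (if P \<phi> then 1 else 0)) \<le> 1"
proof -
  have "(\<Sum>\<phi>\<in>Pow E. pr \<phi> * (if P \<phi> then 1 else 0)) \<le> (\<Sum>\<phi>\<in>Pow E. pr \<phi>)"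
    by (rule sum_mono) (auto simp: pr_nonneg)
  then show ?thesis using sum1 by simp
qed

lemma pr_sum_ge0: "0 \<le> (\<Sum>\<phi>\<in>Pow E. pr \<phi> * (if P \<phi> then 1 else 0))"
  by (rule sum_nonneg) (auto simp: pr_nonneg)

lemma swap_card:
  assumes "\<And>\<phi>. \<phi> \<subseteq> E \<Longrightarrow> A \<phi> \<subseteq> NN"
  shows "(\<Sum>\<phi>\<in>Pow E. pr \<phi> * real (card (A \<phi>))) = (\<Sum>w\<in>NN. \<Sum>\<phi>\<in>Pow E. pr \<phi> * (if w \<in> A \<phi> then 1 else 0))"
proof -
  have "(\<Sum>\<phi>\<in>Pow E. pr \<phi> * real (card (A \<phi>))) = (\<Sum>\<phi>\<in>Pow E. pr \<phi> * (\<Sum>w\<in>NN. if w \<in> A \<phi> then 1 else 0))"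
    by (rule sum.cong[OF refl]) (use card_as_sum[OF finNN] assms in auto)
  also have "\<dots> = (\<Sum>\<phi>\<in>Pow E. \<Sum>w\<in>NN. pr \<phi> * (if w \<in> A \<phi> then 1 else 0))"
    by (simp add: sum_distrib_left)
  also have "\<dots> = (\<Sum>w\<in>NN. \<Sum>\<phi>\<in>Pow E. pr \<phi> * (if w \<in> A \<phi> then 1 else 0))"
    by (rule sum.swap)
  finally show ?thesis .
qed

lemma prob_reach:
  assumes S: "S \<subseteq> NN"
  shows "(\<Sum>\<phi>\<in>Pow E. pr \<phi> * (if w \<in> reach S \<phi> then 1 else 0)) = 1 - (\<Prod>u\<in>S. 1 - pp u w)"
proof (cases "w \<in> S")
  case True
  have "(\<Sum>\<phi>\<in>Pow E. pr \<phi> * (if w \<in> reach S \<phi> then 1 else 0)) = (\<Sum>\<phi>\<in>Pow E. pr \<phi>)"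
    by (rule sum.cong[OF refl]) (use True reach_bip in auto)
  moreover have "(\<Prod>u\<in>S. 1 - pp u w) = 0"
    using True finNN S finite_subset by (intro prod_zero) (auto simp: pp_def)
  ultimately show ?thesis using sum1 by simp
next
  case False
  define Fw where "Fw = {e \<in> E. fst e \<in> S \<and> snd e = w}"
  have FwE: "Fw \<subseteq> E" unfolding Fw_def by auto
  have "(\<Sum>\<phi>\<in>Pow E. pr \<phi> * (if w \<in> reach S \<phi> then 1 else 0)) =
        (\<Sum>\<phi>\<in>Pow E. pr \<phi> - pr \<phi> * (if \<phi> \<inter> Fw = {} then 1 else 0))"
  proof (rule sum.cong[OF refl])
    fix \<phi> assume "\<phi> \<in> Pow E"
    then have "w \<in> reach S \<phi> \<longleftrightarrow> \<phi> \<inter> Fw \<noteq> {}" using reach_bip[of \<phi> S] False unfolding Fw_def by force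
    then show "pr \<phi> * (if w \<in> reach S \<phi> then 1 else 0) = pr \<phi> - pr \<phi> * (if \<phi> \<inter> Fw = {} then 1 else 0)" by auto
  qed
  also have "\<dots> = 1 - (\<Prod>e\<in>Fw. 1 - p e)" by (simp add: sum_subtractf sum1 avoid[OF FwE])
  also have "(\<Prod>e\<in>Fw. 1 - p e) = (\<Prod>u\<in>S. 1 - pp u w)"
  proof -
    have fS: "finite S" using S finNN finite_subset by blast
    have "Fw = (\<lambda>u. (u, w)) ` {u \<in> S. (u, w) \<in> E}" unfolding Fw_def by force
    then have "(\<Prod>e\<in>Fw. 1 - p e) = (\<Prod>u\<in>{u \<in> S. (u, w) \<in> E}. 1 - p (u, w))"
      by (simp add: prod.reindex inj_on_def)
    also have "\<dots> = (\<Prod>u\<in>S. if (u, w) \<in> E then 1 - p (u, w) else 1)"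
      by (rule prod.inter_filter[OF fS])
    also have "\<dots> = (\<Prod>u\<in>S. 1 - pp u w)"
      by (rule prod.cong[OF refl]) (use False in \<open>auto simp: pp_def\<close>)
    finally show ?thesis .
  qed
  finally show ?thesis .
qed

lemma sigma_set:
  assumes S: "S \<subseteq> NN"
  shows "sigma E p S = (\<Sum>w\<in>NN. 1 - (\<Prod>u\<in>S. 1 - pp u w))"
proof -
  have "sigma E p S = (\<Sum>w\<in>NN. \<Sum>\<phi>\<in>Pow E. pr \<phi> * (if w \<in> reach S \<phi> then 1 else 0))"
    unfolding sigma_def by (rule swap_card) (use reach_sub S in auto)
  also have "\<dots> = (\<Sum>w\<in>NN. 1 - (\<Prod>u\<in>S. 1 - pp u w))"
    by (rule sum.cong[OF refl]) (rule prob_reach[OF S])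
  finally show ?thesis .
qed

definition qq :: "policy \<Rightarrow> node \<Rightarrow> real" where
  "qq \<pi> u = (\<Sum>\<phi>\<in>Pow E. pr \<phi> * (if u \<in> policy_seeds \<pi> \<phi> then 1 else 0))"

lemma qq01: "0 \<le> qq \<pi> u \<and> qq \<pi> u \<le> 1" unfolding qq_def using pr_sum_le1 pr_sum_ge0 by auto

lemma qq_sum:
  assumes "\<pi> \<in> policies L R E k"
  shows "(\<Sum>u\<in>NN. qq \<pi> u) \<le> real k"
proof -
  have "(\<Sum>u\<in>NN. qq \<pi> u) = (\<Sum>\<phi>\<in>Pow E. pr \<phi> * real (card (policy_seeds \<pi> \<phi>)))"
    unfolding qq_def by (rule swap_card[symmetric]) (use assms in \<open>auto simp: policies_def\<close>)
  also have "\<dots> \<le> (\<Sum>\<phi>\<in>Pow E. pr \<phi> * real k)"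
    by (rule sum_mono) (use assms in \<open>auto simp: policies_def pr_nonneg intro!: mult_left_mono\<close>)
  also have "\<dots> = real k" using sum1 by (simp add: sum_distrib_right[symmetric])
  finally show ?thesis .
qed

lemma pol_bound:
  assumes pol: "\<pi> \<in> policies L R E k"
  shows "sigma_pol E p \<pi> \<le> (\<Sum>w\<in>NN. min 1 (\<Sum>u\<in>NN. qq \<pi> u * pp u w))"
proof -
  let ?V = "policy_seeds \<pi>"
  have Vsub: "\<And>\<phi>. \<phi> \<subseteq> E \<Longrightarrow> ?V \<phi> \<subseteq> NN" using pol unfolding policies_def by auto
  have "sigma_pol E p \<pi> = (\<Sum>w\<in>NN. \<Sum>\<phi>\<in>Pow E. pr \<phi> * (if w \<in> reach (?V \<phi>) \<phi> then 1 else 0))"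
    unfolding sigma_pol_def by (rule swap_card) (use reach_sub Vsub in auto)
  also have "\<dots> \<le> (\<Sum>w\<in>NN. min 1 (\<Sum>u\<in>NN. qq \<pi> u * pp u w))"
  proof (rule sum_mono)
    fix w assume wN: "w \<in> NN"
    define c where "c u \<phi> = (if u = w then 1 else if (u, w) \<in> E then (if (u, w) \<in> \<phi> then 1 else 0) else (0::real))" for u \<phi>
    have c0: "0 \<le> c u \<phi>" for u \<phi> unfolding c_def by auto
    have pt: "(if w \<in> reach (?V \<phi>) \<phi> then 1 else 0) \<le> (\<Sum>u\<in>NN. (if u \<in> ?V \<phi> then 1 else 0) * c u \<phi>)"
      if phiE: "\<phi> \<subseteq> E" for \<phi>
    proof (cases "w \<in> reach (?V \<phi>) \<phi>")
      case True
      then obtain u where u: "u \<in> ?V \<phi>" "u = w \<or> (u, w) \<in> \<phi>" using reach_bip[OF phiE] by auto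
      have uN: "u \<in> NN" using u Vsub phiE by auto
      have "u \<in> L" if "(u, w) \<in> \<phi>" using that phiE ELR by auto
      moreover have "w \<in> R" if "(u, w) \<in> \<phi>" using that phiE ELR by auto
      ultimately have "u = w \<or> (u \<noteq> w \<and> (u, w) \<in> E \<and> (u, w) \<in> \<phi>)" using u(2) disj phiE by auto
      then have "(if u \<in> ?V \<phi> then 1 else 0) * c u \<phi> = 1" using u(1) unfolding c_def by auto
      moreover have "(if u \<in> ?V \<phi> then 1 else 0) * c u \<phi> \<le> (\<Sum>u\<in>NN. (if u \<in> ?V \<phi> then 1 else 0) * c u \<phi>)"
        by (rule member_le_sum[OF uN]) (auto simp: c0 finL finR)
      ultimately show ?thesis using True by simp
    next
      case False
      then show ?thesis by (simp, intro sum_nonneg) (simp add: c0)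
    qed
    have "(\<Sum>\<phi>\<in>Pow E. pr \<phi> * (if w \<in> reach (?V \<phi>) \<phi> then 1 else 0)) \<le>
          (\<Sum>\<phi>\<in>Pow E. pr \<phi> * (\<Sum>u\<in>NN. (if u \<in> ?V \<phi> then 1 else 0) * c u \<phi>))"
    proof (rule sum_mono)
      fix \<phi> assume "\<phi> \<in> Pow E"
      then show "pr \<phi> * (if w \<in> reach (?V \<phi>) \<phi> then 1 else 0) \<le> pr \<phi> * (\<Sum>u\<in>NN. (if u \<in> ?V \<phi> then 1 else 0) * c u \<phi>)"
        using pt[of \<phi>] pr_nonneg[of \<phi>] by (intro mult_left_mono) auto
    qed
    also have "\<dots> = (\<Sum>u\<in>NN. \<Sum>\<phi>\<in>Pow E. pr \<phi> * ((if u \<in> ?V \<phi> then 1 else 0) * c u \<phi>))"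
      by (simp add: sum_distrib_left sum.swap[of _ "Pow E"])
    also have "\<dots> = (\<Sum>u\<in>NN. qq \<pi> u * pp u w)"
    proof (rule sum.cong[OF refl])
      fix u assume uN: "u \<in> NN"
      show "(\<Sum>\<phi>\<in>Pow E. pr \<phi> * ((if u \<in> ?V \<phi> then 1 else 0) * c u \<phi>)) = qq \<pi> u * pp u w"
      proof (cases "u = w")
        case True then show ?thesis unfolding c_def qq_def pp_def by simp
      next
        case F: False
        show ?thesis
        proof (cases "(u, w) \<in> E")
          case True
          then show ?thesis using indep_seed[OF True, of \<pi>] F unfolding c_def qq_def pp_def by simp
        next
          case False then show ?thesis using F unfolding c_def qq_def pp_def by simp
        qed
      qed
    qed
    finally have A: "(\<Sum>\<phi>\<in>Pow E. pr \<phi> * (if w \<in> reach (?V \<phi>) \<phi> then 1 else 0)) \<le> (\<Sum>u\<in>NN. qq \<pi> u * pp u w)" .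
    then show "(\<Sum>\<phi>\<in>Pow E. pr \<phi> * (if w \<in> reach (?V \<phi>) \<phi> then 1 else 0)) \<le> min 1 (\<Sum>u\<in>NN. qq \<pi> u * pp u w)"
      using pr_sum_le1 by simp
  qed
  finally show ?thesis .
qed

lemma OPTN_fin: "finite {sigma E p S | S. S \<subseteq> NN \<and> card S \<le> k}"
proof -
  have "{sigma E p S | S. S \<subseteq> NN \<and> card S \<le> k} \<subseteq> sigma E p ` Pow NN" by auto
  then show ?thesis using finNN finite_subset by blast
qed

lemma OPTN_ge: "S \<subseteq> NN \<Longrightarrow> card S \<le> k \<Longrightarrow> sigma E p S \<le> OPT_N L R E p k"
  unfolding OPT_N_def by (rule Max_ge[OF OPTN_fin]) auto

lemma OPTN_nonneg: "0 \<le> OPT_N L R E p k"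
proof -
  have "sigma E p {} = 0" unfolding sigma_def reach_def by simp
  then show ?thesis using OPTN_ge[of "{}"] by simp
qed

lemma OPTN_le:
  assumes "\<And>S. S \<subseteq> NN \<Longrightarrow> card S \<le> k \<Longrightarrow> sigma E p S \<le> B"
  shows "OPT_N L R E p k \<le> B"
  unfolding OPT_N_def using OPTN_fin assms by (subst Max_le_iff) auto

lemma pol_upper:
  assumes pol: "\<pi> \<in> policies L R E k"
  shows "sigma_pol E p \<pi> \<le> exp 1 / (exp 1 - 1) * OPT_N L R E p k"
proof -
  obtain S where S: "S \<subseteq> NN" "card S \<le> k"
    "(1 - exp (-1)) * (\<Sum>w\<in>NN. min 1 (\<Sum>u\<in>NN. qq \<pi> u * pp u w)) \<le> (\<Sum>w\<in>NN. 1 - (\<Prod>u\<in>S. 1 - pp u w))"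
    using main_round[of "qq \<pi>" k] qq01 qq_sum[OF pol] by blast
  have e1: "0 < 1 - exp (-1::real)" by simp
  have "(1 - exp (-1)) * sigma_pol E p \<pi> \<le> (1 - exp (-1)) * (\<Sum>w\<in>NN. min 1 (\<Sum>u\<in>NN. qq \<pi> u * pp u w))"
    using pol_bound[OF pol] e1 by simp
  also have "\<dots> \<le> sigma E p S" using S(3) sigma_set[OF S(1)] by simp
  also have "\<dots> \<le> OPT_N L R E p k" by (rule OPTN_ge[OF S(1,2)])
  finally have ineq: "(1 - exp (-1)) * sigma_pol E p \<pi> \<le> OPT_N L R E p k" .
  have eq:  "exp 1 / (exp 1 - 1) = 1 / (1 - exp (-1::real))"
    by (simp add: exp_minus field_simps)
  have "sigma_pol E p \<pi> \<le> OPT_N L R E p k / (1 - exp (-1))"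
    using e1 ineq by (simp add: le_divide_eq mult.commute)
  then show ?thesis using eq by simp
qed

lemma none_pol: "(\<lambda>_. None) \<in> policies L R E k"
proof -
  have "seeds_seq (\<lambda>_. None) \<phi> n = []" for \<phi> n by (induction n) auto
  then show ?thesis unfolding policies_def policy_seeds_def by simp
qed

lemma sigma_pol_le_card: "\<pi> \<in> policies L R E k \<Longrightarrow> sigma_pol E p \<pi> \<le> real (card NN)"
proof -
  assume pol: "\<pi> \<in> policies L R E k"
  have "sigma_pol E p \<pi> \<le> (\<Sum>\<phi>\<in>Pow E. pr \<phi> * real (card NN))"
    unfolding sigma_pol_def
  proof (rule sum_mono)
    fix \<phi> assume "\<phi> \<in> Pow E"
    then have "card (reach (policy_seeds \<pi> \<phi>) \<phi>) \<le> card NN"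
      using reach_sub[of \<phi> "policy_seeds \<pi> \<phi>"] pol finNN unfolding policies_def by (auto intro: card_mono)
    then show "pr \<phi> * real (card (reach (policy_seeds \<pi> \<phi>) \<phi>)) \<le> pr \<phi> * real (card NN)"
      using pr_nonneg \<open>\<phi> \<in> Pow E\<close> by (auto intro!: mult_left_mono)
  qed
  also have "\<dots> = real (card NN)" using sum1 by (simp add: sum_distrib_right[symmetric])
  finally show ?thesis .
qed

lemma bdd_pol: "bdd_above (sigma_pol E p ` policies L R E k)"
  by (rule bdd_aboveI2[where M="real (card NN)"]) (rule sigma_pol_le_card)

lemma OPTA_ge: "\<pi> \<in> policies L R E k \<Longrightarrow> sigma_pol E p \<pi> \<le> OPT_A L R E p k"
  unfolding OPT_A_def by (rule cSup_upper) (use bdd_pol in auto)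

lemma OPTA_upper: "OPT_A L R E p k \<le> exp 1 / (exp 1 - 1) * OPT_N L R E p k"
  unfolding OPT_A_def using none_pol pol_upper by (intro cSup_least) auto

lemma ratio_upper: "OPT_A L R E p k / OPT_N L R E p k \<le> exp 1 / (exp 1 - 1)"
proof (cases "OPT_N L R E p k = 0")
  case True
  have "0 \<le> exp 1 / (exp 1 - 1::real)" by (simp add: less_imp_le)
  then show ?thesis using True by simp
next
  case False
  then have "0 < OPT_N L R E p k" using OPTN_nonneg[of k] by simp
  then show ?thesis using OPTA_upper by (simp add: divide_le_eq)
qed

end



locale inst = bip L R E p for L R E p +
  fixes N :: "node \<Rightarrow> node set" and D k m :: nat and q :: real
  assumes Edef: "E = {(u, w). u \<in> L \<and> w \<in> N u}"
    and pdef: "p = (\<lambda>_. q)"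
    and NR: "\<And>u. u \<in> L \<Longrightarrow> N u \<subseteq> R \<and> card (N u) = D"
    and cardR: "card R = m"
    and rich: "\<And>U X. U \<subseteq> R \<Longrightarrow> D \<le> card U \<Longrightarrow> finite X \<Longrightarrow> card X < k \<Longrightarrow> \<exists>u\<in>L. u \<notin> X \<and> N u \<subseteq> U"
begin

definition pol :: policy where
  "pol = (\<lambda>(xs, obs). if length xs < k \<and> D \<le> card (R - snd ` obs)
      then Some (SOME u. u \<in> L \<and> u \<notin> set xs \<and> N u \<subseteq> R - snd ` obs) else None)"

abbreviation sq where "sq \<phi> n \<equiv> seeds_seq pol \<phi> n"

lemma obs_img: "\<phi> \<subseteq> E \<Longrightarrow> snd ` observed xs \<phi> = \<phi> `` set xs"
  unfolding observed_bip by force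

definition good :: "edge set \<Rightarrow> node list \<Rightarrow> bool" where
  "good \<phi> xs \<longleftrightarrow> distinct xs \<and> set xs \<subseteq> L \<and> length xs \<le> k \<and>
     (\<forall>u\<in>set xs. \<forall>u'\<in>set xs. u \<noteq> u' \<longrightarrow> \<phi> `` {u} \<inter> \<phi> `` {u'} = {})"

lemma sq_Suc: "\<phi> \<subseteq> E \<Longrightarrow> sq \<phi> (Suc n) =
   (if length (sq \<phi> n) < k \<and> D \<le> card (R - \<phi> `` set (sq \<phi> n))
    then sq \<phi> n @ [SOME u. u \<in> L \<and> u \<notin> set (sq \<phi> n) \<and> N u \<subseteq> R - \<phi> `` set (sq \<phi> n)] else sq \<phi> n)"
  by (simp add: pol_def obs_img Let_def)

lemma good_sq: assumes phi: "\<phi> \<subseteq> E" shows "good \<phi> (sq \<phi> n)"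
proof (induction n)
  case 0 then show ?case unfolding good_def by simp
next
  case (Suc n)
  let ?xs = "sq \<phi> n"
  let ?U = "R - \<phi> `` set ?xs"
  show ?case
  proof (cases "length ?xs < k \<and> D \<le> card ?U")
    case True
    have "\<exists>u\<in>L. u \<notin> set ?xs \<and> N u \<subseteq> ?U"
      by (rule rich) (use True Suc.IH in \<open>auto simp: good_def distinct_card\<close>)
    then have ex: "\<exists>u. u \<in> L \<and> u \<notin> set ?xs \<and> N u \<subseteq> ?U" by blast
    define x where "x = (SOME u. u \<in> L \<and> u \<notin> set ?xs \<and> N u \<subseteq> ?U)"
    have x: "x \<in> L" "x \<notin> set ?xs" "N x \<subseteq> ?U" using someI_ex[OF ex] unfolding x_def by auto
    have img: "\<phi> `` {x} \<subseteq> N x" using phi Edef by auto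
    have dx: "\<phi> `` {x} \<inter> \<phi> `` {u'} = {}" if "u' \<in> set ?xs" for u'
      using img x(3) that by blast
    have eq: "sq \<phi> (Suc n) = ?xs @ [x]" using sq_Suc[OF phi, of n] True unfolding x_def by simp
    show ?thesis unfolding eq using Suc.IH True x dx unfolding good_def by (auto simp: Int_commute)
  next
    case False
    then have "sq \<phi> (Suc n) = ?xs" using sq_Suc[OF phi, of n] by simp
    then show ?thesis using Suc.IH by simp
  qed
qed

lemma stall: assumes phi: "\<phi> \<subseteq> E" and st: "sq \<phi> (Suc n) = sq \<phi> n" shows "sq \<phi> (n + j) = sq \<phi> n"
proof (induction j)
  case 0 then show ?case by simp
next
  case (Suc j)
  have "sq \<phi> (Suc (n + j)) = sq \<phi> (Suc n)" using sq_Suc[OF phi, of "n + j"] sq_Suc[OF phi, of n] Suc.IH by simp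
  then show ?case using st by simp
qed

lemma nostall_len: assumes phi: "\<phi> \<subseteq> E" shows "(\<forall>j<n. sq \<phi> (Suc j) \<noteq> sq \<phi> j) \<longrightarrow> length (sq \<phi> n) = n"
proof (induction n)
  case 0 then show ?case by simp
next
  case (Suc n)
  show ?case
  proof
    assume a: "\<forall>j<Suc n. sq \<phi> (Suc j) \<noteq> sq \<phi> j"
    then have "length (sq \<phi> n) = n" using Suc.IH by simp
    moreover have "sq \<phi> (Suc n) \<noteq> sq \<phi> n" using a by simp
    ultimately show "length (sq \<phi> (Suc n)) = Suc n" using sq_Suc[OF phi, of n] by (simp split: if_splits)
  qed
qed

lemma sq_mono: "set (sq \<phi> n) \<subseteq> set (sq \<phi> (n + j))"
proof (induction j)
  case 0 then show ?case by simp
next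
  case (Suc j)
  obtain ys where "sq \<phi> (Suc (n + j)) = sq \<phi> (n + j) @ ys" using seq_append by blast
  then show ?case using Suc by auto
qed

definition fin where "fin \<phi> = sq \<phi> k"

lemma fin_stall:
  assumes phi: "\<phi> \<subseteq> E"
  shows "\<exists>j\<le>k. sq \<phi> (Suc j) = sq \<phi> j"
proof (rule ccontr)
  assume a: "\<not> (\<exists>j\<le>k. sq \<phi> (Suc j) = sq \<phi> j)"
  have "\<forall>j<Suc k. sq \<phi> (Suc j) \<noteq> sq \<phi> j" using a less_Suc_eq_le by blast
  then have "length (sq \<phi> (Suc k)) = Suc k" using nostall_len[OF phi, of "Suc k"] by blast
  moreover have "length (sq \<phi> (Suc k)) \<le> k" using good_sq[OF phi, of "Suc k"] unfolding good_def by blast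
  ultimately show False by simp
qed

lemma fin_props:
  assumes phi: "\<phi> \<subseteq> E"
  shows "policy_seeds pol \<phi> = set (fin \<phi>)"
    and "length (fin \<phi>) < k \<Longrightarrow> card (R - \<phi> `` set (fin \<phi>)) < D"
proof -
  obtain j where j: "j \<le> k" "sq \<phi> (Suc j) = sq \<phi> j" using fin_stall[OF phi] by blast
  have st: "sq \<phi> n = sq \<phi> j" if "j \<le> n" for n
  proof -
    have "sq \<phi> (j + (n - j)) = sq \<phi> j" by (rule stall[OF phi j(2)])
    moreover have "j + (n - j) = n" using that by simp
    ultimately show ?thesis by (simp only:)
  qed
  have fj: "fin \<phi> = sq \<phi> j" unfolding fin_def by (rule st[OF j(1)])
  have sub: "set (sq \<phi> n) \<subseteq> set (fin \<phi>)" for n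
  proof (cases "n \<le> k")
    case True
    have "set (sq \<phi> n) \<subseteq> set (sq \<phi> (n + (k - n)))" by (rule sq_mono)
    moreover have "n + (k - n) = k" using True by simp
    ultimately show ?thesis unfolding fin_def by (simp only:)
  next
    case False
    then have "sq \<phi> n = sq \<phi> j" using st[of n] j(1) by linarith
    then show ?thesis using fj by simp
  qed
  have "policy_seeds pol \<phi> \<subseteq> set (fin \<phi>)" unfolding policy_seeds_def using sub by blast
  moreover have "set (fin \<phi>) \<subseteq> policy_seeds pol \<phi>" unfolding policy_seeds_def fin_def by blast
  ultimately show "policy_seeds pol \<phi> = set (fin \<phi>)" by (rule antisym)
  assume l: "length (fin \<phi>) < k"
  show "card (R - \<phi> `` set (fin \<phi>)) < D"
  proof (rule ccontr)
    assume c: "\<not> card (R - \<phi> `` set (fin \<phi>)) < D"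
    have "length (sq \<phi> j) < k \<and> D \<le> card (R - \<phi> `` set (sq \<phi> j))" using l c fj by simp
    then have "sq \<phi> (Suc j) = sq \<phi> j @ [SOME u. u \<in> L \<and> u \<notin> set (sq \<phi> j) \<and> N u \<subseteq> R - \<phi> `` set (sq \<phi> j)]"
      using sq_Suc[OF phi, of j] by (simp only: if_True simp_thms)
    then have "length (sq \<phi> (Suc j)) = Suc (length (sq \<phi> j))" by (simp only: length_append_singleton)
    then show False using j(2) by (simp only:)
  qed
qed

lemma pol_in: "pol \<in> policies L R E k"
  unfolding policies_def
proof (intro CollectI ballI conjI)
  fix \<phi> assume "\<phi> \<in> Pow E"
  then have phi: "\<phi> \<subseteq> E" by auto
  have g: "good \<phi> (fin \<phi>)" unfolding fin_def by (rule good_sq[OF phi])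
  show "policy_seeds pol \<phi> \<subseteq> L \<union> R" using g fin_props(1)[OF phi] unfolding good_def by auto
  show "finite (policy_seeds pol \<phi>)" using fin_props(1)[OF phi] by simp
  show "card (policy_seeds pol \<phi>) \<le> k" using g fin_props(1)[OF phi] unfolding good_def by (simp add: distinct_card)
qed

end



lemma tw_excl:
  assumes "distinct xs" "a \<in> set xs" "b \<in> set xs" "a \<noteq> b"
  shows "(a \<in> set (takeWhile (\<lambda>x. x \<noteq> b) xs)) \<longleftrightarrow> \<not> (b \<in> set (takeWhile (\<lambda>x. x \<noteq> a) xs))"
  using assms
proof (induction xs)
  case Nil then show ?case by simp
next
  case (Cons y ys)
  show ?case
  proof (cases "y = a")
    case True
    then show ?thesis using Cons.prems by auto
  next
    case F1: False
    show ?thesis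
    proof (cases "y = b")
      case True
      then show ?thesis using Cons.prems by auto
    next
      case False
      then show ?thesis using Cons F1 by auto
    qed
  qed
qed

context inst
begin

abbreviation SS where "SS \<phi> \<equiv> policy_seeds pol \<phi>"
definition II :: "node \<Rightarrow> edge set \<Rightarrow> real" where "II u \<phi> = (if u \<in> SS \<phi> then 1 else 0)"
definition XX :: "node \<Rightarrow> edge set \<Rightarrow> real" where "XX u \<phi> = real (card (\<phi> `` {u}))"
definition cc :: real where "cc = q * real D"
definition BB :: "node \<Rightarrow> node \<Rightarrow> edge set \<Rightarrow> real" where
  "BB u u' \<phi> = (if u' \<in> set (fin \<phi>) \<and> u \<in> set (takeWhile (\<lambda>x. x \<noteq> u') (fin \<phi>)) then 1 else 0)"

lemma finNu: "u \<in> L \<Longrightarrow> finite (N u)" using NR finR finite_subset by blast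

lemma img_sub: "\<phi> \<subseteq> E \<Longrightarrow> \<phi> `` {u} \<subseteq> N u" using Edef by auto

lemma XX_sum: "\<phi> \<subseteq> E \<Longrightarrow> u \<in> L \<Longrightarrow> XX u \<phi> = (\<Sum>w\<in>N u. if (u, w) \<in> \<phi> then 1 else 0)"
  unfolding XX_def using card_as_sum[OF finNu img_sub] by auto

lemma XX_le: "\<phi> \<subseteq> E \<Longrightarrow> u \<in> L \<Longrightarrow> XX u \<phi> \<le> real D"
  unfolding XX_def using card_mono[OF finNu img_sub] NR by force

lemma XX_ge: "0 \<le> XX u \<phi>" unfolding XX_def by simp

lemma EXX: assumes u: "u \<in> L" shows "(\<Sum>\<phi>\<in>Pow E. pr \<phi> * XX u \<phi>) = cc"
proof -
  have "(\<Sum>\<phi>\<in>Pow E. pr \<phi> * XX u \<phi>) = (\<Sum>\<phi>\<in>Pow E. \<Sum>w\<in>N u. pr \<phi> * (if (u, w) \<in> \<phi> then 1 else 0))"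
    by (rule sum.cong[OF refl]) (use XX_sum u in \<open>auto simp: sum_distrib_left\<close>)
  also have "\<dots> = (\<Sum>w\<in>N u. \<Sum>\<phi>\<in>Pow E. pr \<phi> * (if (u, w) \<in> \<phi> then 1 else 0))" by (rule sum.swap)
  also have "\<dots> = (\<Sum>w\<in>N u. q)"
    by (rule sum.cong[OF refl]) (use edge_prob u Edef pdef in auto)
  also have "\<dots> = cc" unfolding cc_def using NR[OF u] by simp
  finally show ?thesis .
qed

lemma XX_inv1: "\<phi> \<subseteq> E \<Longrightarrow> XX u \<phi> = XX u (\<phi> \<inter> outE u)"
  unfolding XX_def outE_def by (rule arg_cong[where f="\<lambda>A. real (card A)"]) auto

lemma XX_inv2: "u \<noteq> u' \<Longrightarrow> XX u \<phi> = XX u (\<phi> - outE u')"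
  unfolding XX_def outE_def by (rule arg_cong[where f="\<lambda>A. real (card A)"]) auto

lemma II_inv: "\<phi> \<subseteq> E \<Longrightarrow> II u \<phi> = II u (\<phi> - outE u)"
proof -
  assume phi: "\<phi> \<subseteq> E"
  have "\<phi> - outE u \<subseteq> E" using phi by blast
  then show ?thesis unfolding II_def using seeds_agree[OF phi _ agree_out[OF phi], where \<pi>=pol] by simp
qed

lemma BB_inv: "\<phi> \<subseteq> E \<Longrightarrow> BB u u' \<phi> = BB u u' (\<phi> - outE u')"
proof -
  assume phi: "\<phi> \<subseteq> E"
  have "\<phi> - outE u' \<subseteq> E" using phi by blast
  from seq_tw[OF phi this agree_out[OF phi], where \<pi>=pol and n=k]
  show ?thesis unfolding BB_def fin_def by simp
qed

lemma EIX: assumes u: "u \<in> L" shows "(\<Sum>\<phi>\<in>Pow E. pr \<phi> * (II u \<phi> * XX u \<phi>)) = qq pol u * cc"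
proof -
  have "(\<Sum>\<phi>\<in>Pow E. pr \<phi> * (II u \<phi> * XX u \<phi>)) = (\<Sum>\<phi>\<in>Pow E. pr \<phi> * II u \<phi>) * (\<Sum>\<phi>\<in>Pow E. pr \<phi> * XX u \<phi>)"
    by (rule indep[OF outE_sub]) (use II_inv XX_inv1 in auto)
  then show ?thesis using EXX[OF u] unfolding qq_def II_def by simp
qed

lemma EIX2: assumes u: "u \<in> L" shows "(\<Sum>\<phi>\<in>Pow E. pr \<phi> * (II u \<phi> * (XX u \<phi> - cc)^2)) \<le> qq pol u * (real D * cc)"
proof -
  have "(\<Sum>\<phi>\<in>Pow E. pr \<phi> * (II u \<phi> * (XX u \<phi> - cc)^2)) = (\<Sum>\<phi>\<in>Pow E. pr \<phi> * II u \<phi>) * (\<Sum>\<phi>\<in>Pow E. pr \<phi> * (XX u \<phi> - cc)^2)"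
    by (rule indep[OF outE_sub]) (use II_inv XX_inv1 in auto)
  also have "(\<Sum>\<phi>\<in>Pow E. pr \<phi> * (XX u \<phi> - cc)^2) = (\<Sum>\<phi>\<in>Pow E. pr \<phi> * (XX u \<phi>)^2) - 2 * cc * (\<Sum>\<phi>\<in>Pow E. pr \<phi> * XX u \<phi>) + cc^2 * (\<Sum>\<phi>\<in>Pow E. pr \<phi>)"
  proof -
    have "pr \<phi> * (XX u \<phi> - cc)^2 = pr \<phi> * (XX u \<phi>)^2 - 2 * cc * (pr \<phi> * XX u \<phi>) + cc^2 * pr \<phi>" for \<phi>
      by (simp add: power2_diff algebra_simps)
    then show ?thesis by (simp add: sum_subtractf sum.distrib sum_distrib_left)
  qed
  also have "\<dots> = (\<Sum>\<phi>\<in>Pow E. pr \<phi> * (XX u \<phi>)^2) - cc^2" using EXX[OF u] sum1 by (simp add: power2_eq_square)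
  also have "\<dots> \<le> real D * cc"
  proof -
    have "(\<Sum>\<phi>\<in>Pow E. pr \<phi> * (XX u \<phi>)^2) \<le> (\<Sum>\<phi>\<in>Pow E. pr \<phi> * (real D * XX u \<phi>))"
    proof (rule sum_mono)
      fix \<phi> assume "\<phi> \<in> Pow E"
      then have "(XX u \<phi>)^2 \<le> real D * XX u \<phi>" using XX_le[of \<phi> u] XX_ge[of u \<phi>] u
        by (simp add: power2_eq_square mult_right_mono)
      then show "pr \<phi> * (XX u \<phi>)^2 \<le> pr \<phi> * (real D * XX u \<phi>)"
        using pr_nonneg \<open>\<phi> \<in> Pow E\<close> by (auto intro!: mult_left_mono)
    qed
    also have "\<dots> = real D * cc" using EXX[OF u] by (simp add: sum_distrib_left[symmetric] algebra_simps)
    finally have "(\<Sum>\<phi>\<in>Pow E. pr \<phi> * (XX u \<phi>)^2) \<le> real D * cc" .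
    moreover have "0 \<le> cc^2" by simp
    ultimately show ?thesis by linarith
  qed
  finally show ?thesis using qq01[of pol u] unfolding qq_def II_def by (simp add: mult_left_mono)
qed

lemma cross0:
  assumes u: "u \<in> L" and u': "u' \<in> L" and ne: "u \<noteq> u'"
  shows "(\<Sum>\<phi>\<in>Pow E. pr \<phi> * (BB u u' \<phi> * (XX u \<phi> - cc) * (XX u' \<phi> - cc))) = 0"
proof -
  have "(\<Sum>\<phi>\<in>Pow E. pr \<phi> * ((BB u u' \<phi> * (XX u \<phi> - cc)) * (XX u' \<phi> - cc))) =
        (\<Sum>\<phi>\<in>Pow E. pr \<phi> * (BB u u' \<phi> * (XX u \<phi> - cc))) * (\<Sum>\<phi>\<in>Pow E. pr \<phi> * (XX u' \<phi> - cc))"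
  proof (rule indep[OF outE_sub])
    fix \<phi> :: "edge set" assume "\<phi> \<subseteq> E"
    then show "BB u u' \<phi> * (XX u \<phi> - cc) = BB u u' (\<phi> - outE u') * (XX u (\<phi> - outE u') - cc)"
      using BB_inv XX_inv2[OF ne] by metis
  next
    fix \<phi> :: "edge set" assume "\<phi> \<subseteq> E"
    then show "XX u' \<phi> - cc = XX u' (\<phi> \<inter> outE u') - cc" using XX_inv1 by metis
  qed
  moreover have "(\<Sum>\<phi>\<in>Pow E. pr \<phi> * (XX u' \<phi> - cc)) = 0"
    using EXX[OF u'] sum1 by (simp add: right_diff_distrib sum_subtractf sum_distrib_right[symmetric])
  ultimately show ?thesis by (simp add: mult.assoc)
qed

lemma II_BB:
  assumes phi: "\<phi> \<subseteq> E" and ne: "u \<noteq> u'"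
  shows "II u \<phi> * II u' \<phi> = BB u u' \<phi> + BB u' u \<phi>"
proof -
  have g: "distinct (fin \<phi>)" using good_sq[OF phi] unfolding good_def fin_def by blast
  have S: "SS \<phi> = set (fin \<phi>)" by (rule fin_props(1)[OF phi])
  show ?thesis
  proof (cases "u \<in> set (fin \<phi>) \<and> u' \<in> set (fin \<phi>)")
    case True
    then show ?thesis using tw_excl[OF g _ _ ne] S unfolding II_def BB_def by auto
  next
    case False
    then show ?thesis using S unfolding II_def BB_def by (auto dest: set_takeWhileD)
  qed
qed

definition ZZ :: "edge set \<Rightarrow> real" where "ZZ \<phi> = (\<Sum>u\<in>L. II u \<phi> * (XX u \<phi> - cc))"

lemma EZZ2: "(\<Sum>\<phi>\<in>Pow E. pr \<phi> * (ZZ \<phi>)^2) \<le> real D * cc * (\<Sum>u\<in>L. qq pol u)"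
proof -
  let ?a = "\<lambda>u \<phi>. II u \<phi> * (XX u \<phi> - cc)"
  have "(\<Sum>\<phi>\<in>Pow E. pr \<phi> * (ZZ \<phi>)^2) = (\<Sum>\<phi>\<in>Pow E. \<Sum>u\<in>L. \<Sum>u'\<in>L. pr \<phi> * (?a u \<phi> * ?a u' \<phi>))"
  proof (rule sum.cong[OF refl])
    fix \<phi>
    have "(ZZ \<phi>)^2 = (\<Sum>u\<in>L. \<Sum>u'\<in>L. ?a u \<phi> * ?a u' \<phi>)" unfolding ZZ_def power2_eq_square sum_product ..
    then show "pr \<phi> * (ZZ \<phi>)^2 = (\<Sum>u\<in>L. \<Sum>u'\<in>L. pr \<phi> * (?a u \<phi> * ?a u' \<phi>))" by (simp add: sum_distrib_left)
  qed
  also have "\<dots> = (\<Sum>u\<in>L. \<Sum>u'\<in>L. \<Sum>\<phi>\<in>Pow E. pr \<phi> * (?a u \<phi> * ?a u' \<phi>))"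
    by (simp add: sum.swap[of _ "Pow E"])
  also have "\<dots> = (\<Sum>u\<in>L. \<Sum>\<phi>\<in>Pow E. pr \<phi> * (II u \<phi> * (XX u \<phi> - cc)^2))"
  proof (rule sum.cong[OF refl])
    fix u assume u: "u \<in> L"
    have "(\<Sum>u'\<in>L. \<Sum>\<phi>\<in>Pow E. pr \<phi> * (?a u \<phi> * ?a u' \<phi>)) =
          (\<Sum>\<phi>\<in>Pow E. pr \<phi> * (?a u \<phi> * ?a u \<phi>)) + (\<Sum>u'\<in>L - {u}. \<Sum>\<phi>\<in>Pow E. pr \<phi> * (?a u \<phi> * ?a u' \<phi>))"
      by (rule sum.remove[OF finL u])
    also have "(\<Sum>u'\<in>L - {u}. \<Sum>\<phi>\<in>Pow E. pr \<phi> * (?a u \<phi> * ?a u' \<phi>)) = 0"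
    proof (rule sum.neutral, rule ballI)
      fix u' assume u': "u' \<in> L - {u}"
      then have ne: "u \<noteq> u'" by auto
      have "(\<Sum>\<phi>\<in>Pow E. pr \<phi> * (?a u \<phi> * ?a u' \<phi>)) =
            (\<Sum>\<phi>\<in>Pow E. pr \<phi> * (BB u u' \<phi> * (XX u \<phi> - cc) * (XX u' \<phi> - cc)) +
                           pr \<phi> * (BB u' u \<phi> * (XX u' \<phi> - cc) * (XX u \<phi> - cc)))"
      proof (rule sum.cong[OF refl])
        fix \<phi> assume "\<phi> \<in> Pow E"
        then have "II u \<phi> * II u' \<phi> = BB u u' \<phi> + BB u' u \<phi>" using II_BB[OF _ ne] by auto
        then show "pr \<phi> * (?a u \<phi> * ?a u' \<phi>) = pr \<phi> * (BB u u' \<phi> * (XX u \<phi> - cc) * (XX u' \<phi> - cc)) +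
                           pr \<phi> * (BB u' u \<phi> * (XX u' \<phi> - cc) * (XX u \<phi> - cc))"
          by (simp add: algebra_simps)
      qed
      also have "\<dots> = 0" using cross0[OF u _ ne] cross0[OF _ u ne[symmetric]] u' by (simp add: sum.distrib)
      finally show "(\<Sum>\<phi>\<in>Pow E. pr \<phi> * (?a u \<phi> * ?a u' \<phi>)) = 0" .
    qed
    also have "(\<Sum>\<phi>\<in>Pow E. pr \<phi> * (?a u \<phi> * ?a u \<phi>)) = (\<Sum>\<phi>\<in>Pow E. pr \<phi> * (II u \<phi> * (XX u \<phi> - cc)^2))"
      by (rule sum.cong[OF refl]) (simp add: II_def power2_eq_square)
    finally show "(\<Sum>u'\<in>L. \<Sum>\<phi>\<in>Pow E. pr \<phi> * (?a u \<phi> * ?a u' \<phi>)) = (\<Sum>\<phi>\<in>Pow E. pr \<phi> * (II u \<phi> * (XX u \<phi> - cc)^2))" by simp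
  qed
  also have "\<dots> \<le> (\<Sum>u\<in>L. qq pol u * (real D * cc))" by (rule sum_mono) (rule EIX2)
  also have "\<dots> = real D * cc * (\<Sum>u\<in>L. qq pol u)" by (simp add: sum_distrib_left algebra_simps)
  finally show ?thesis .
qed

end



context inst
begin

definition TT :: "edge set \<Rightarrow> real" where "TT \<phi> = real (card (SS \<phi>))"
definition ET :: real where "ET = (\<Sum>\<phi>\<in>Pow E. pr \<phi> * TT \<phi>)"

lemma SS_sub: "\<phi> \<subseteq> E \<Longrightarrow> SS \<phi> \<subseteq> L"
proof -
  assume phi: "\<phi> \<subseteq> E"
  have "good \<phi> (fin \<phi>)" using good_sq[OF phi] unfolding fin_def .
  then show ?thesis using fin_props(1)[OF phi] unfolding good_def by simp
qed

lemma TT_sum: "\<phi> \<subseteq> E \<Longrightarrow> TT \<phi> = (\<Sum>u\<in>L. II u \<phi>)"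
  unfolding TT_def II_def using card_as_sum[OF finL SS_sub] by simp

lemma TT_le: "\<phi> \<subseteq> E \<Longrightarrow> TT \<phi> \<le> real k"
  using pol_in unfolding policies_def TT_def by auto

lemma TT_len: "\<phi> \<subseteq> E \<Longrightarrow> TT \<phi> = real (length (fin \<phi>))"
proof -
  assume phi: "\<phi> \<subseteq> E"
  have "good \<phi> (fin \<phi>)" using good_sq[OF phi] unfolding fin_def .
  then show ?thesis using fin_props(1)[OF phi] unfolding good_def TT_def by (simp add: distinct_card)
qed

lemma sum_qq: "(\<Sum>u\<in>L. qq pol u) = ET"
proof -
  have "(\<Sum>u\<in>L. qq pol u) = (\<Sum>u\<in>L. \<Sum>\<phi>\<in>Pow E. pr \<phi> * II u \<phi>)" unfolding qq_def II_def by simp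
  also have "\<dots> = (\<Sum>\<phi>\<in>Pow E. \<Sum>u\<in>L. pr \<phi> * II u \<phi>)" by (rule sum.swap)
  also have "\<dots> = ET" unfolding ET_def by (rule sum.cong[OF refl]) (simp add: TT_sum sum_distrib_left)
  finally show ?thesis .
qed

lemma ET_le: "ET \<le> real k"
proof -
  have "ET \<le> (\<Sum>\<phi>\<in>Pow E. pr \<phi> * real k)" unfolding ET_def
    by (rule sum_mono) (use TT_le pr_nonneg in \<open>auto intro!: mult_left_mono\<close>)
  also have "\<dots> = real k" using sum1 by (simp add: sum_distrib_right[symmetric])
  finally show ?thesis .
qed

lemma img_card: assumes phi: "\<phi> \<subseteq> E" shows "real (card (\<phi> `` SS \<phi>)) = (\<Sum>u\<in>L. II u \<phi> * XX u \<phi>)"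
proof -
  have g: "good \<phi> (fin \<phi>)" using good_sq[OF phi] unfolding fin_def .
  have S: "SS \<phi> = set (fin \<phi>)" by (rule fin_props(1)[OF phi])
  have fS: "finite (SS \<phi>)" using S by simp
  have "\<phi> `` SS \<phi> = (\<Union>u\<in>SS \<phi>. \<phi> `` {u})" by auto
  moreover have "card (\<Union>u\<in>SS \<phi>. \<phi> `` {u}) = (\<Sum>u\<in>SS \<phi>. card (\<phi> `` {u}))"
  proof (rule card_UN_disjoint[OF fS])
    show "\<forall>u\<in>SS \<phi>. finite (\<phi> `` {u})"
      using finite_subset[OF phi finE'] by (simp add: finite_Image)
    show "\<forall>u\<in>SS \<phi>. \<forall>u'\<in>SS \<phi>. u \<noteq> u' \<longrightarrow> \<phi> `` {u} \<inter> \<phi> `` {u'} = {}"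
      using g S unfolding good_def by simp
  qed
  ultimately have "real (card (\<phi> `` SS \<phi>)) = (\<Sum>u\<in>SS \<phi>. XX u \<phi>)" unfolding XX_def by simp
  also have "\<dots> = (\<Sum>u\<in>SS \<phi>. II u \<phi> * XX u \<phi>)"
    unfolding II_def by simp
  also have "\<dots> = (\<Sum>u\<in>L. II u \<phi> * XX u \<phi>)"
    by (rule sum.mono_neutral_left[OF finL SS_sub[OF phi]]) (simp add: II_def)
  finally show ?thesis .
qed

lemma reach_card: assumes phi: "\<phi> \<subseteq> E"
  shows "real (card (reach (SS \<phi>) \<phi>)) = TT \<phi> + (\<Sum>u\<in>L. II u \<phi> * XX u \<phi>)"
proof -
  have fS: "finite (SS \<phi>)" using fin_props(1)[OF phi] by simp
  have fI: "finite (\<phi> `` SS \<phi>)" using phi finE' finite_subset by (metis finite_Image)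
  have d: "SS \<phi> \<inter> \<phi> `` SS \<phi> = {}" using SS_sub[OF phi] phi ELR disj by auto
  have "card (reach (SS \<phi>) \<phi>) = card (SS \<phi>) + card (\<phi> `` SS \<phi>)"
    unfolding reach_bip[OF phi] by (rule card_Un_disjoint[OF fS fI d])
  then show ?thesis using img_card[OF phi] unfolding TT_def by simp
qed

lemma sigma_pol_val: "sigma_pol E p pol = (1 + cc) * ET"
proof -
  have "sigma_pol E p pol = (\<Sum>\<phi>\<in>Pow E. pr \<phi> * TT \<phi> + (\<Sum>u\<in>L. pr \<phi> * (II u \<phi> * XX u \<phi>)))"
    unfolding sigma_pol_def by (rule sum.cong[OF refl]) (simp add: reach_card sum_distrib_left algebra_simps)
  also have "\<dots> = ET + (\<Sum>u\<in>L. \<Sum>\<phi>\<in>Pow E. pr \<phi> * (II u \<phi> * XX u \<phi>))"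
    unfolding ET_def by (simp add: sum.distrib sum.swap[of _ "Pow E"])
  also have "(\<Sum>u\<in>L. \<Sum>\<phi>\<in>Pow E. pr \<phi> * (II u \<phi> * XX u \<phi>)) = (\<Sum>u\<in>L. qq pol u * cc)"
    by (rule sum.cong[OF refl]) (rule EIX)
  also have "\<dots> = (\<Sum>u\<in>L. qq pol u) * cc" by (rule sum_distrib_right[symmetric])
  also have "\<dots> = cc * ET" using sum_qq by simp
  finally show ?thesis by (simp add: algebra_simps)
qed

definition gg :: real where "gg = real m - real D - cc * real k"

lemma cc_ge: "0 \<le> q \<Longrightarrow> 0 \<le> cc" unfolding cc_def by simp

lemma short_big:
  assumes phi: "\<phi> \<subseteq> E" and q0: "0 \<le> q" and sh: "TT \<phi> < real k"
  shows "gg < ZZ \<phi>"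
proof -
  let ?A = "\<phi> `` SS \<phi>"
  have AR: "?A \<subseteq> R" using phi ELR by auto
  have "length (fin \<phi>) < k" using sh TT_len[OF phi] by simp
  then have "card (R - \<phi> `` set (fin \<phi>)) < D" by (rule fin_props(2)[OF phi])
  then have "card (R - ?A) < D" using fin_props(1)[OF phi] by simp
  moreover have "card (R - ?A) = m - card ?A" using card_Diff_subset[OF finite_subset[OF AR finR] AR] cardR by simp
  ultimately have "real m < real (card ?A) + real D" by linarith
  moreover have "real (card ?A) = ZZ \<phi> + cc * TT \<phi>"
    unfolding img_card[OF phi] ZZ_def TT_sum[OF phi] by (simp add: algebra_simps sum.distrib sum_subtractf sum_distrib_left)
  moreover have "cc * TT \<phi> \<le> cc * real k" using TT_le[OF phi] cc_ge[OF q0] by (simp add: mult_left_mono)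
  ultimately show ?thesis unfolding gg_def by linarith
qed

lemma adaptive_lower:
  assumes q0: "0 \<le> q" and g0: "0 < gg"
  shows "(1 + cc) * real k * (1 - real D * cc * real k / gg^2) \<le> OPT_A L R E p k"
proof -
  define P where "P = (\<Sum>\<phi>\<in>Pow E. pr \<phi> * (if TT \<phi> < real k then 1 else 0))"
  have P1: "P \<le> (\<Sum>\<phi>\<in>Pow E. pr \<phi> * ((ZZ \<phi>)^2 / gg^2))" unfolding P_def
  proof (rule sum_mono)
    fix \<phi> assume "\<phi> \<in> Pow E"
    then have phi: "\<phi> \<subseteq> E" by auto
    have "(if TT \<phi> < real k then 1 else 0) \<le> (ZZ \<phi>)^2 / gg^2"
    proof (cases "TT \<phi> < real k")
      case True
      then have "gg < ZZ \<phi>" using short_big[OF phi q0] by simp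
      then have "gg^2 \<le> (ZZ \<phi>)^2" using g0 by (intro power_mono) auto
      then show ?thesis using True g0 by simp
    qed simp
    then show "pr \<phi> * (if TT \<phi> < real k then 1 else 0) \<le> pr \<phi> * ((ZZ \<phi>)^2 / gg^2)"
      using pr_nonneg[OF phi] by (rule mult_left_mono)
  qed
  also have "\<dots> = (\<Sum>\<phi>\<in>Pow E. pr \<phi> * (ZZ \<phi>)^2) / gg^2" by (simp add: sum_divide_distrib)
  also have "\<dots> \<le> real D * cc * ET / gg^2" using EZZ2 sum_qq g0 by (simp add: divide_right_mono)
  also have "\<dots> \<le> real D * cc * real k / gg^2"
    using ET_le cc_ge[OF q0] g0 by (intro divide_right_mono mult_left_mono) auto
  finally have Pb: "P \<le> real D * cc * real k / gg^2" .
  have "real k * (1 - P) = (\<Sum>\<phi>\<in>Pow E. pr \<phi> * (real k - real k * (if TT \<phi> < real k then 1 else 0)))"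
  proof -
    have "(\<Sum>\<phi>\<in>Pow E. pr \<phi> * (real k - real k * (if TT \<phi> < real k then 1 else 0))) =
          (\<Sum>\<phi>\<in>Pow E. real k * pr \<phi> - real k * (pr \<phi> * (if TT \<phi> < real k then 1 else 0)))"
      by (rule sum.cong[OF refl]) (simp add: algebra_simps)
    also have "\<dots> = real k * (\<Sum>\<phi>\<in>Pow E. pr \<phi>) - real k * P"
      unfolding P_def by (simp add: sum_subtractf sum_distrib_left)
    finally show ?thesis using sum1 by (simp add: algebra_simps)
  qed
  also have "\<dots> \<le> ET" unfolding ET_def
  proof (rule sum_mono)
    fix \<phi> assume "\<phi> \<in> Pow E"
    then have phi: "\<phi> \<subseteq> E" by auto
    have "real k - real k * (if TT \<phi> < real k then 1 else 0) \<le> TT \<phi>"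
      using TT_le[OF phi] by (auto simp: TT_def)
    then show "pr \<phi> * (real k - real k * (if TT \<phi> < real k then 1 else 0)) \<le> pr \<phi> * TT \<phi>"
      using pr_nonneg[OF phi] by (rule mult_left_mono)
  qed
  finally have "real k * (1 - real D * cc * real k / gg^2) \<le> ET"
    using Pb by (smt (verit) mult_left_mono of_nat_0_le_iff)
  then have "(1 + cc) * (real k * (1 - real D * cc * real k / gg^2)) \<le> (1 + cc) * ET"
    using cc_ge[OF q0] by (intro mult_left_mono) auto
  also have "\<dots> = sigma_pol E p pol" by (rule sigma_pol_val[symmetric])
  also have "\<dots> \<le> OPT_A L R E p k" by (rule OPTA_ge[OF pol_in])
  finally show ?thesis by (simp add: mult.assoc)
qed

end



lemma exp_tangent: "exp z + exp z * (y - z) \<le> exp (y::real)"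
proof -
  have "exp z * (1 + (y - z)) \<le> exp z * exp (y - z)" by (intro mult_left_mono) auto
  then show ?thesis by (simp add: exp_diff algebra_simps)
qed

context inst
begin

lemma pp_q: "pp u w = (if u = w then 1 else if (u, w) \<in> E then q else 0)"
  unfolding pp_def by (simp add: pdef)

definition xw :: "node set \<Rightarrow> node \<Rightarrow> real" where "xw S w = real (card {u \<in> S. (u, w) \<in> E})"

lemma term_L: assumes S: "S \<subseteq> NN" and w: "w \<in> L"
  shows "1 - (\<Prod>u\<in>S. 1 - pp u w) \<le> (if w \<in> S then 1 else 0)"
proof (cases "w \<in> S")
  case True
  have "0 \<le> (\<Prod>u\<in>S. 1 - pp u w)" using pp01 by (intro prod_nonneg) (simp add: algebra_simps)
  then show ?thesis using True by simp
next
  case False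
  have "(\<Prod>u\<in>S. 1 - pp u w) = 1"
  proof (rule prod.neutral, rule ballI)
    fix u assume "u \<in> S"
    then have "u \<noteq> w" using False by auto
    moreover have "(u, w) \<notin> E" using w ELR disj by auto
    ultimately show "1 - pp u w = 1" unfolding pp_def by simp
  qed
  then show ?thesis using False by simp
qed

lemma term_R: assumes S: "S \<subseteq> NN" and w: "w \<in> R" and q: "0 < q" "q < 1"
  shows "1 - (\<Prod>u\<in>S. 1 - pp u w) \<le> (if w \<in> S then 1 else 0) + (1 - (1 - q) powr xw S w)"
proof (cases "w \<in> S")
  case True
  have "0 \<le> (\<Prod>u\<in>S. 1 - pp u w)" using pp01 by (intro prod_nonneg) (simp add: algebra_simps)
  moreover have "(1 - q) powr xw S w \<le> 1" using q by (intro powr_le1) (auto simp: xw_def)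
  ultimately show ?thesis using True by simp
next
  case False
  have fS: "finite S" using S finNN finite_subset by blast
  have "(\<Prod>u\<in>S. 1 - pp u w) = (\<Prod>u\<in>S. if (u, w) \<in> E then 1 - q else 1)"
    by (rule prod.cong[OF refl]) (use False in \<open>auto simp: pp_q\<close>)
  also have "\<dots> = (\<Prod>u\<in>{u \<in> S. (u, w) \<in> E}. 1 - q)" by (rule prod.inter_filter[OF fS, symmetric])
  also have "\<dots> = (1 - q) ^ card {u \<in> S. (u, w) \<in> E}" by simp
  also have "\<dots> = (1 - q) powr xw S w" unfolding xw_def using q by (simp add: powr_realpow)
  finally show ?thesis using False by simp
qed

lemma sum_xw: assumes S: "S \<subseteq> NN" shows "(\<Sum>w\<in>R. xw S w) \<le> real D * real (card S)"
proof -
  have fS: "finite S" using S finNN finite_subset by blast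
  have "(\<Sum>w\<in>R. xw S w) = (\<Sum>w\<in>R. \<Sum>u\<in>S. if (u, w) \<in> E then 1 else 0)"
    unfolding xw_def by (rule sum.cong[OF refl]) (use card_as_sum[OF fS, of "{u \<in> S. (u, _) \<in> E}"] in auto)
  also have "\<dots> = (\<Sum>u\<in>S. \<Sum>w\<in>R. if (u, w) \<in> E then 1 else 0)" by (rule sum.swap)
  also have "\<dots> \<le> (\<Sum>u\<in>S. real D)"
  proof (rule sum_mono)
    fix u assume "u \<in> S"
    have "(\<Sum>w\<in>R. if (u, w) \<in> E then 1 else (0::real)) = real (card {w \<in> R. (u, w) \<in> E})"
      using card_as_sum[OF finR, of "{w \<in> R. (u, w) \<in> E}"] by auto
    also have "\<dots> \<le> real D"
    proof (cases "u \<in> L")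
      case True
      have "{w \<in> R. (u, w) \<in> E} = N u" using NR[OF True] Edef True by auto
      then show ?thesis using NR[OF True] by simp
    next
      case False
      then have "{w \<in> R. (u, w) \<in> E} = {}" using Edef by auto
      then show ?thesis by (simp only:) simp
    qed
    finally show "(\<Sum>w\<in>R. if (u, w) \<in> E then 1 else 0) \<le> real D" .
  qed
  also have "\<dots> = real D * real (card S)" by simp
  finally show ?thesis .
qed

lemma na_bound:
  assumes S: "S \<subseteq> NN" and cS: "card S \<le> k" and q: "0 < q" "q < 1" and m0: "0 < m"
  shows "sigma E p S \<le> real k + real m * (1 - (1 - q) powr (real D * real k / real m))"
proof -
  define a where "a = real D * real k / real m"
  define Q where "Q = (1 - q) powr a"
  define lb where "lb = ln (1 - q)"
  have lb0: "lb < 0" unfolding lb_def using q by simp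
  have Q0: "0 < Q" unfolding Q_def using q by simp
  have tang: "1 - (1 - q) powr x \<le> 1 - Q - Q * lb * (x - a)" for x
  proof -
    have "(1 - q) powr x = exp (x * lb)" "Q = exp (a * lb)" unfolding Q_def lb_def powr_def using q by auto
    then show ?thesis using exp_tangent[of "a * lb" "x * lb"] by (simp add: algebra_simps)
  qed
  have dLR: "L \<inter> R = {}" by (rule disj)
  have "sigma E p S = (\<Sum>w\<in>L. 1 - (\<Prod>u\<in>S. 1 - pp u w)) + (\<Sum>w\<in>R. 1 - (\<Prod>u\<in>S. 1 - pp u w))"
    unfolding sigma_set[OF S] by (rule sum.union_disjoint[OF finL finR dLR])
  also have "\<dots> \<le> (\<Sum>w\<in>L. if w \<in> S then 1 else 0) + (\<Sum>w\<in>R. (if w \<in> S then 1 else 0) + (1 - (1 - q) powr xw S w))"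
    by (intro add_mono sum_mono term_L[OF S] term_R[OF S _ q]) auto
  also have "\<dots> = (\<Sum>w\<in>NN. if w \<in> S then 1 else 0) + (\<Sum>w\<in>R. 1 - (1 - q) powr xw S w)"
    by (simp add: sum.distrib sum.union_disjoint[OF finL finR dLR])
  also have "(\<Sum>w\<in>NN. if w \<in> S then 1 else (0::real)) = real (card S)"
    using card_as_sum[OF finNN S] by simp
  also have "(\<Sum>w\<in>R. 1 - (1 - q) powr xw S w) \<le> (\<Sum>w\<in>R. 1 - Q - Q * lb * (xw S w - a))"
    by (rule sum_mono) (rule tang)
  also have "\<dots> = real m * (1 - Q) - Q * lb * ((\<Sum>w\<in>R. xw S w) - real m * a)"
  proof -
    have "(\<Sum>w\<in>R. 1 - Q - Q * lb * (xw S w - a)) = (\<Sum>w\<in>R. (1 - Q + Q * lb * a) - Q * lb * xw S w)"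
      by (rule sum.cong[OF refl]) (simp add: algebra_simps)
    also have "\<dots> = real m * (1 - Q + Q * lb * a) - Q * lb * (\<Sum>w\<in>R. xw S w)"
      using cardR by (simp add: sum_subtractf sum_distrib_left)
    finally show ?thesis by (simp add: algebra_simps)
  qed
  also have "\<dots> \<le> real m * (1 - Q)"
  proof -
    have "(\<Sum>w\<in>R. xw S w) \<le> real D * real k" using sum_xw[OF S] cS
      by (smt (verit) mult_left_mono of_nat_0_le_iff of_nat_mono)
    moreover have "real m * a = real D * real k" unfolding a_def using m0 by simp
    moreover have "0 \<le> - Q * lb" using Q0 lb0 by (simp add: mult_pos_neg less_imp_le)
    ultimately have "0 \<le> (- Q * lb) * (real m * a - (\<Sum>w\<in>R. xw S w))"
      by (metis diff_ge_0_iff_ge mult_nonneg_nonneg)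
    then show ?thesis by (simp add: algebra_simps)
  qed
  finally show ?thesis unfolding Q_def a_def using cS by simp
qed

lemma OPTN_inst:
  assumes q: "0 < q" "q < 1" and m0: "0 < m"
  shows "OPT_N L R E p k \<le> real k + real m * (1 - (1 - q) powr (real D * real k / real m))"
  using na_bound[OF _ _ q m0] by (intro OPTN_le) auto

end



lemma construct:
  fixes D k m :: nat and q :: real
  assumes q: "0 \<le> q" "q \<le> 1"
  shows "\<exists>L R E p N. inst L R E p N D k m q"
proof -
  define R where "R = {0..<m}"
  define X where "X = {(A, c). A \<subseteq> R \<and> card A = D \<and> c < k}"
  have fX: "finite X"
  proof -
    have "X \<subseteq> Pow R \<times> {0..<k}" unfolding X_def by auto
    then show ?thesis unfolding R_def by (rule finite_subset) auto
  qed
  obtain h where h: "bij_betw h X {0..<card X}" using ex_bij_betw_finite_nat[OF fX] by blast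
  define enc where "enc x = m + h x" for x
  have inj: "inj_on enc X" using h unfolding enc_def bij_betw_def inj_on_def by auto
  define L where "L = enc ` X"
  define E where "E = {(enc x, w) | x w. x \<in> X \<and> w \<in> fst x}"
  define N where "N u = {w. (u, w) \<in> E}" for u
  define p where "p = (\<lambda>_::edge. q)"
  have Nenc: "N (enc x) = fst x" if "x \<in> X" for x
  proof -
    have "(enc x, w) \<in> E \<longleftrightarrow> w \<in> fst x" for w
      using that inj unfolding E_def by (cases x) (auto dest: inj_onD)
    then show ?thesis unfolding N_def by auto
  qed
  have fstR: "fst x \<subseteq> R" "card (fst x) = D" if "x \<in> X" for x using that unfolding X_def by auto
  have bg: "bip_graph L R E p"
    unfolding bip_graph_def
  proof (intro conjI)
    show "finite L" unfolding L_def using fX by simp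
    show "finite R" unfolding R_def by simp
    show "L \<inter> R = {}" unfolding L_def R_def enc_def by auto
    show "E \<subseteq> L \<times> R"
    proof
      fix e assume "e \<in> E"
      then obtain x w where xw: "e = (enc x, w)" "x \<in> X" "w \<in> fst x" unfolding E_def by blast
      then have "w \<in> R" using fstR(1)[of x] by blast
      then show "e \<in> L \<times> R" using xw unfolding L_def by blast
    qed
    show "\<forall>e\<in>E. 0 \<le> p e \<and> p e \<le> 1" unfolding p_def using q by simp
  qed
  have "inst L R E p N D k m q"
  proof (intro inst.intro inst_axioms.intro bip.intro bg)
    show "E = {(u, w). u \<in> L \<and> w \<in> N u}" unfolding N_def L_def E_def by auto
    show "p = (\<lambda>_. q)" unfolding p_def ..
    fix u assume "u \<in> L"
    then obtain x where x: "x \<in> X" "u = enc x" unfolding L_def by auto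
    then show "N u \<subseteq> R \<and> card (N u) = D" using Nenc fstR by simp
  next
    show "card R = m" unfolding R_def by simp
  next
    fix U Y :: "nat set" assume U: "U \<subseteq> R" "D \<le> card U" and Y: "finite Y" "card Y < k"
    obtain A where A: "A \<subseteq> U" "card A = D" "finite A" using obtain_subset_with_card_n[OF U(2)] by metis
    define K where "K = (\<lambda>c. enc (A, c)) ` {0..<k}"
    have AX: "(A, c) \<in> X" if "c < k" for c unfolding X_def using A U that by auto
    have "inj_on (\<lambda>c. enc (A, c)) {0..<k}"
    proof (rule inj_onI)
      fix c c' assume "c \<in> {0..<k}" "c' \<in> {0..<k}" "enc (A, c) = enc (A, c')"
      then have "(A, c) = (A, c')" using inj AX inj_onD[of enc X "(A, c)" "(A, c')"] by auto
      then show "c = c'" by simp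
    qed
    then have cK: "card K = k" unfolding K_def by (simp add: card_image)
    have "\<not> K \<subseteq> Y"
    proof
      assume "K \<subseteq> Y"
      then have "card K \<le> card Y" using Y by (intro card_mono) auto
      then show False using cK Y by simp
    qed
    then have "\<exists>c<k. enc (A, c) \<notin> Y" by (auto simp: K_def)
    then obtain c where c: "c < k" "enc (A, c) \<notin> Y" by blast
    have "enc (A, c) \<in> L" unfolding L_def using AX[OF c(1)] by auto
    moreover have "N (enc (A, c)) \<subseteq> U" using Nenc[OF AX[OF c(1)]] A by simp
    ultimately show "\<exists>u\<in>L. u \<notin> Y \<and> N u \<subseteq> U" using c by blast
  qed
  then show ?thesis by blast
qed

definition an :: "nat \<Rightarrow> real" where
  "an n = ((1 + real n) * real n ^ 4 * (1 - 1 / real n)) /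
          (real n ^ 4 + real (n^5 + n^4 + n^2) * (1 - (1 - 1 / real n) ^ n))"

lemma an_tendsto: "an \<longlonglongrightarrow> exp 1 / (exp 1 - 1)"
proof -
  define b where "b n = ((1 + 1 / real n) * (1 - 1 / real n)) /
          (1 / real n + (1 + 1 / real n + (1 / real n)^3) * (1 - (1 + (-1) / real n) ^ n))" for n
  have "b \<longlonglongrightarrow> ((1 + 0) * (1 - 0)) / (0 + (1 + 0 + 0^3) * (1 - exp (-1)))"
    unfolding b_def
    by (intro tendsto_intros tendsto_exp_limit_sequentially) auto
  moreover have "((1 + 0) * (1 - 0)) / (0 + (1 + 0 + 0^3) * (1 - exp (-1))) = exp 1 / (exp 1 - 1::real)"
    by (simp add: exp_minus field_simps)
  ultimately have bt: "b \<longlonglongrightarrow> exp 1 / (exp 1 - 1)" by simp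
  have ev: "eventually (\<lambda>n. b n = an n) sequentially"
  proof (rule eventually_sequentiallyI[of 1])
    fix n :: nat assume n: "1 \<le> n"
    then have n0: "0 < real n" by simp
    have num: "(1 + real n) * real n ^ 4 * (1 - 1 / real n) = real n ^ 5 * ((1 + 1 / real n) * (1 - 1 / real n))"
      using n0 by (simp add: field_simps power_eq_if)
    have den: "real n ^ 4 + real (n^5 + n^4 + n^2) * (1 - (1 - 1 / real n) ^ n) =
               real n ^ 5 * (1 / real n + (1 + 1 / real n + (1 / real n)^3) * (1 - (1 + (-1) / real n) ^ n))"
      using n0 by (simp add: field_simps power_eq_if)
    have "real n ^ 5 \<noteq> 0" using n0 by simp
    then show "b n = an n" unfolding an_def b_def num den by simp
  qed
  show ?thesis by (rule Lim_transform_eventually[OF bt ev])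
qed

lemma an_le_ratio:
  assumes n: "2 \<le> n"
  shows "\<exists>L R E p. bip_graph L R E p \<and> an n \<le> OPT_A L R E p (n^4) / OPT_N L R E p (n^4)"
proof -
  obtain L R E p N where I: "inst L R E p N (n^2) (n^4) (n^5 + n^4 + n^2) (1 / real n)"
    using construct[of "1 / real n" "n^2" "n^4" "n^5 + n^4 + n^2"] n by auto
  interpret inst L R E p N "n^2" "n^4" "n^5 + n^4 + n^2" "1 / real n" by (rule I)
  have n0: "0 < real n" using n by simp
  have n1: "1 / real n < 1" using n by simp
  have ccv: "cc = real n" unfolding cc_def using n0 by (simp add: power2_eq_square)
  have ggv: "gg = real n ^ 4" unfolding gg_def ccv by (simp add: power_eq_if)
  have A: "(1 + real n) * real n ^ 4 * (1 - 1 / real n) \<le> OPT_A L R E p (n^4)"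
  proof -
    have "(1 + cc) * real (n^4) * (1 - real (n^2) * cc * real (n^4) / gg^2) \<le> OPT_A L R E p (n^4)"
      by (rule adaptive_lower) (use n0 ggv in auto)
    moreover have "real (n^2) * cc * real (n^4) / gg^2 = 1 / real n"
      unfolding ccv ggv using n0 by (simp add: field_simps power_eq_if)
    ultimately show ?thesis unfolding ccv by simp
  qed
  have B: "OPT_N L R E p (n^4) \<le> real n ^ 4 + real (n^5 + n^4 + n^2) * (1 - (1 - 1 / real n) ^ n)"
  proof -
    have O1: "OPT_N L R E p (n^4) \<le> real (n^4) + real (n^5 + n^4 + n^2) * (1 - (1 - 1 / real n) powr (real (n^2) * real (n^4) / real (n^5 + n^4 + n^2)))"
      by (rule OPTN_inst) (use n0 n1 in auto)
    moreover have "(1 - 1 / real n) powr real n \<le> (1 - 1 / real n) powr (real (n^2) * real (n^4) / real (n^5 + n^4 + n^2))"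
    proof (rule powr_mono')
      have "real (n^2) * real (n^4) \<le> real n * real (n^5 + n^4 + n^2)"
        by (simp only: of_nat_mult[symmetric] of_nat_le_iff) (simp add: algebra_simps power_eq_if)
      moreover have pos: "0 < real (n^5 + n^4 + n^2)" using n by (simp only: of_nat_0_less_iff) simp
      ultimately show "real (n^2) * real (n^4) / real (n^5 + n^4 + n^2) \<le> real n"
        by (simp only: pos_divide_le_eq[OF pos] mult.commute)
    qed (use n1 in auto)
    moreover have "(1 - 1 / real n) powr real n = (1 - 1 / real n) ^ n"
      using n1 n0 by (simp add: powr_realpow)
    ultimately have "(1 - 1 / real n) ^ n \<le> (1 - 1 / real n) powr (real (n^2) * real (n^4) / real (n^5 + n^4 + n^2))" by simp
    then have "real (n^5 + n^4 + n^2) * (1 - (1 - 1 / real n) powr (real (n^2) * real (n^4) / real (n^5 + n^4 + n^2)))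
          \<le> real (n^5 + n^4 + n^2) * (1 - (1 - 1 / real n) ^ n)" by (intro mult_left_mono) auto
    then show ?thesis using O1 by simp
  qed
  have Apos: "0 < (1 + real n) * real n ^ 4 * (1 - 1 / real n)" using n0 n1 by simp
  have Npos: "0 < OPT_N L R E p (n^4)"
  proof -
    have "0 < OPT_A L R E p (n^4)" using A Apos by linarith
    then have "0 < exp 1 / (exp 1 - 1) * OPT_N L R E p (n^4)" using OPTA_upper[of "n^4"] by linarith
    moreover have "0 < exp 1 / (exp 1 - 1::real)" by simp
    ultimately show ?thesis by (metis zero_less_mult_pos)
  qed
  have "an n \<le> OPT_A L R E p (n^4) / OPT_N L R E p (n^4)"
    unfolding an_def by (rule frac_le) (use A B Apos Npos in auto)
  then show ?thesis using bg by blast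
qed

theorem theorem3:
  defines "ratios \<equiv> {OPT_A L R E p k / OPT_N L R E p k | L R E p k.
                        bip_graph L R E p \<and> k \<ge> 1}"
  shows "bdd_above ratios \<and> Sup ratios = exp 1 / (exp 1 - 1)"
proof -
  have ub: "x \<le> exp 1 / (exp 1 - 1)" if "x \<in> ratios" for x
  proof -
    obtain L R E p k where x: "x = OPT_A L R E p k / OPT_N L R E p k" "bip_graph L R E p"
      using \<open>x \<in> ratios\<close> unfolding ratios_def by blast
    interpret bip L R E p by (rule bip.intro[OF x(2)])
    show ?thesis using ratio_upper x(1) by simp
  qed
  have bdd: "bdd_above ratios" using ub by (intro bdd_aboveI) blast
  have mem: "\<exists>L R E p. bip_graph L R E p \<and> an n \<le> OPT_A L R E p (n^4) / OPT_N L R E p (n^4)" if "2 \<le> n" for n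
    using an_le_ratio[OF that] .
  have le: "an n \<le> Sup ratios" if n: "2 \<le> n" for n
  proof -
    obtain L R E p where LR: "bip_graph L R E p" "an n \<le> OPT_A L R E p (n^4) / OPT_N L R E p (n^4)"
      using mem[OF n] by blast
    have "1 \<le> n^4" using n by simp
    then have "OPT_A L R E p (n^4) / OPT_N L R E p (n^4) \<in> ratios" unfolding ratios_def using LR(1) by blast
    then have "OPT_A L R E p (n^4) / OPT_N L R E p (n^4) \<le> Sup ratios" using bdd by (rule cSup_upper)
    then show ?thesis using LR(2) by linarith
  qed
  have ne: "ratios \<noteq> {}"
  proof -
    obtain L R E p where LR: "bip_graph L R E p" "an 2 \<le> OPT_A L R E p (2^4) / OPT_N L R E p (2^4)"
      using mem[of 2] by auto
    then show ?thesis unfolding ratios_def by force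
  qed
  have "Sup ratios \<le> exp 1 / (exp 1 - 1)" using ne ub by (rule cSup_least)
  moreover have "exp 1 / (exp 1 - 1) \<le> Sup ratios"
    using an_tendsto by (rule LIMSEQ_le_const2) (use le in auto)
  ultimately show ?thesis using bdd by simp
qed



end
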